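(* Let $T\ge1$, $\tau>0$ with $\tau L<\frac14$, and let $(x_t)$ be generated from a deterministic $x_0$ by the randomized incremental proximal method $x_{t+1}=\operatorname{prox}_{\tau m g_{j_t}}(x_t-\tau\nabla f_{i_t}(x_t))$. Let $\epsilon'>0$ be such that $a:=2\tau L(1+\epsilon')<1$, let $v=(1+1/\epsilon')\sigma_*^2\tau$, and define $\alpha_{-1}=\alpha_0=1$, $\alpha_t=\frac{T-t+2}{a+T-t+1}\alpha_{t-1}$ for $t=1,\dots,T$. Then \[ \mathbb{E}[h(x_{T+1})-h^*]\le\frac{1}{2\tau\alpha_T}\mathbb{E}\|x_0-x^*\|^2+\frac{v\alpha_0}{\alpha_T}+\frac{v}{\alpha_T}\sum_{t=1}^T\alpha_t+\frac{1}{\alpha_T}\mathbb{E}[h(x_0)-h^*]+\frac{8\tau m^2L_g^2}{\alpha_T}\sum_{t=0}^T\alpha_t. \]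
   Context: Let $D$ be a probability distribution on an index set, and for each index $i$ let $f_i:\mathbb{R}^n\to\mathbb{R}$ be convex and differentiable with $L$-Lipschitz gradient ($L>0$). Let $f(x)=\mathbb{E}_{i\sim D}[f_i(x)]$ with $\mathbb{E}_{i\sim D}[\nabla f_i(x)]=\nabla f(x)$. Let $g=\sum_{j=1}^m g_j$ with each $g_j:\mathbb{R}^n\to\mathbb{R}$ proper, convex, lower semicontinuous and $L_g$-Lipschitz. Let $h=f+g$, assume $\arg\min h\neq\emptyset$, $h^*=\min h$, and let $x^*\in\arg\min h$ be such that $\sigma_*^2:=\mathbb{E}_{i\sim D}\|\nabla f_i(x^* )\|^2<\infty$. $\operatorname{prox}_{\lambda\phi}(y)=\arg\min_z\{\lambda\phi(z)+\tfrac12\|y-z\|^2\}$. At each iteration $i_t\sim D$ and $j_t$ uniform on $\{1,\dots,m\}$, independent of each other and of $x_0,\dots,x_t$. *)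

theory Defs
  imports "HOL-Probability.Probability"
begin

definition prox :: "real \<Rightarrow> ('a::real_normed_vector \<Rightarrow> real) \<Rightarrow> 'a \<Rightarrow> 'a" where
  "prox lam phi y = (SOME z. \<forall>w. lam * phi z + (1/2) * (norm (y - z))\<^sup>2
                                 \<le> lam * phi w + (1/2) * (norm (y - w))\<^sup>2)"

fun alphaw :: "real \<Rightarrow> nat \<Rightarrow> nat \<Rightarrow> real" where
  "alphaw a T 0 = 1"
| "alphaw a T (Suc t) = (real T - real (Suc t) + 2) / (a + real T - real (Suc t) + 1) * alphaw a T t"

text \<open>Lower semicontinuity of a real-valued function on the whole space:
  f x \<le> liminf_{y \<rightarrow> x} f y, i.e. for every c < f x, eventually c < f y near x.\<close>
definition lsc :: "('a::topological_space \<Rightarrow> real) \<Rightarrow> bool" where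
  "lsc f \<longleftrightarrow> (\<forall>x. \<forall>c < f x. \<forall>\<^sub>F y in at x. c < f y)"

text \<open>Independence of two random variables with (possibly) different value types:
  the joint law is the product of the marginal laws (cf. indep_var_distribution_eq).\<close>
definition indep_rv :: "'w measure \<Rightarrow> 'a measure \<Rightarrow> ('w \<Rightarrow> 'a) \<Rightarrow> 'b measure \<Rightarrow> ('w \<Rightarrow> 'b) \<Rightarrow> bool" where
  "indep_rv M MA X MB Y \<longleftrightarrow> X \<in> measurable M MA \<and> Y \<in> measurable M MB \<and>
     distr M (MA \<Otimes>\<^sub>M MB) (\<lambda>\<omega>. (X \<omega>, Y \<omega>)) = distr M MA X \<Otimes>\<^sub>M distr M MB Y"

end

theory Submission
  imports Defs
begin

lemma line_deriv:
  fixes \<phi> :: "'a::euclidean_space \<Rightarrow> real"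
  assumes "\<And>y. (\<phi> has_derivative (\<lambda>u. d y \<bullet> u)) (at y)"
  shows "((\<lambda>s. \<phi> (x + s *\<^sub>R v)) has_real_derivative (d (x + s *\<^sub>R v) \<bullet> v)) (at s)"
proof -
  have 1: "((\<lambda>s. x + s *\<^sub>R v) has_derivative (\<lambda>h. h *\<^sub>R v)) (at s)"
    by (auto intro!: derivative_eq_intros)
  have "((\<phi> \<circ> (\<lambda>s. x + s *\<^sub>R v)) has_derivative ((\<lambda>u. d (x + s *\<^sub>R v) \<bullet> u) \<circ> (\<lambda>h. h *\<^sub>R v))) (at s)"
    by (rule diff_chain_at[OF 1 assms])
  moreover have "(\<lambda>u. d (x + s *\<^sub>R v) \<bullet> u) \<circ> (\<lambda>h. h *\<^sub>R v) = (*) (d (x + s *\<^sub>R v) \<bullet> v)"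
    by (rule ext) (simp add: o_def)
  ultimately show ?thesis
    unfolding has_field_derivative_def by (simp add: o_def)
qed

lemma smooth_bound:
  fixes \<phi> :: "'a::euclidean_space \<Rightarrow> real"
  assumes der: "\<And>y. (\<phi> has_derivative (\<lambda>u. d y \<bullet> u)) (at y)"
    and lip: "L-lipschitz_on UNIV d"
  shows "\<phi> y \<le> \<phi> x + d x \<bullet> (y - x) + L/2 * (norm (y - x))\<^sup>2"
    and "\<phi> y \<ge> \<phi> x + d x \<bullet> (y - x) - L/2 * (norm (y - x))\<^sup>2"
proof -
  define v where "v = y - x"
  have L0: "L \<ge> 0" using lip by (auto simp: lipschitz_on_def)
  have dv: "\<bar>(d (x + s *\<^sub>R v) - d x) \<bullet> v\<bar> \<le> L * s * (norm v)\<^sup>2" if "s \<ge> 0" for s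
  proof -
    have "\<bar>(d (x + s *\<^sub>R v) - d x) \<bullet> v\<bar> \<le> norm (d (x + s *\<^sub>R v) - d x) * norm v"
      by (rule Cauchy_Schwarz_ineq2)
    also have "norm (d (x + s *\<^sub>R v) - d x) \<le> L * norm (s *\<^sub>R v)"
      using lip unfolding lipschitz_on_def by (metis UNIV_I add_diff_cancel_left' dist_norm)
    then have "norm (d (x + s *\<^sub>R v) - d x) * norm v \<le> L * norm (s *\<^sub>R v) * norm v"
      by (simp add: mult_right_mono)
    also have "\<dots> = L * s * (norm v)\<^sup>2" using that by (simp add: power2_eq_square)
    finally show ?thesis .
  qed
  let ?k1 = "\<lambda>s. \<phi> (x + s *\<^sub>R v) - s * (d x \<bullet> v) - L/2 * s\<^sup>2 * (norm v)\<^sup>2"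
  let ?k2 = "\<lambda>s. \<phi> (x + s *\<^sub>R v) - s * (d x \<bullet> v) + L/2 * s\<^sup>2 * (norm v)\<^sup>2"
  have "?k1 1 \<le> ?k1 0"
  proof (rule DERIV_nonpos_imp_nonincreasing[of 0 1 ?k1])
    fix s :: real assume s: "0 \<le> s" "s \<le> 1"
    have "(?k1 has_real_derivative (d (x + s *\<^sub>R v) \<bullet> v - d x \<bullet> v - L * s * (norm v)\<^sup>2)) (at s)"
      by (rule derivative_eq_intros line_deriv[OF der] refl | simp)+
    moreover have "d (x + s *\<^sub>R v) \<bullet> v - d x \<bullet> v - L * s * (norm v)\<^sup>2 \<le> 0"
      using dv[OF s(1)] by (simp add: inner_diff_left)
    ultimately show "\<exists>y. DERIV ?k1 s :> y \<and> y \<le> 0" by blast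
  qed simp
  then show "\<phi> y \<le> \<phi> x + d x \<bullet> (y - x) + L/2 * (norm (y - x))\<^sup>2"
    by (simp add: v_def)
  have "?k2 0 \<le> ?k2 1"
  proof (rule DERIV_nonneg_imp_nondecreasing[of 0 1 ?k2])
    fix s :: real assume s: "0 \<le> s" "s \<le> 1"
    have "(?k2 has_real_derivative (d (x + s *\<^sub>R v) \<bullet> v - d x \<bullet> v + L * s * (norm v)\<^sup>2)) (at s)"
      by (rule derivative_eq_intros line_deriv[OF der] refl | simp)+
    moreover have "d (x + s *\<^sub>R v) \<bullet> v - d x \<bullet> v + L * s * (norm v)\<^sup>2 \<ge> 0"
      using dv[OF s(1)] by (simp add: inner_diff_left)
    ultimately show "\<exists>y. DERIV ?k2 s :> y \<and> y \<ge> 0" by blast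
  qed simp
  then show "\<phi> y \<ge> \<phi> x + d x \<bullet> (y - x) - L/2 * (norm (y - x))\<^sup>2"
    by (simp add: v_def)
qed

lemma norm_diff_sq:
  fixes a b :: "'a::real_inner"
  shows "(norm (a - b))\<^sup>2 = (norm a)\<^sup>2 - 2 * (a \<bullet> b) + (norm b)\<^sup>2"
  by (simp add: power2_norm_eq_inner inner_diff_left inner_diff_right inner_commute)

lemma norm_add_sq:
  fixes a b :: "'a::real_inner"
  shows "(norm (a + b))\<^sup>2 = (norm a)\<^sup>2 + 2 * (a \<bullet> b) + (norm b)\<^sup>2"
  by (simp add: power2_norm_eq_inner inner_add_left inner_add_right inner_commute)

lemma small_nonpos:
  fixes A B :: real
  assumes "\<And>s. 0 < s \<Longrightarrow> s \<le> 1 \<Longrightarrow> A \<le> s * B"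
  shows "A \<le> 0"
proof (rule ccontr)
  assume A: "\<not> A \<le> 0"
  show False
  proof (cases "B \<le> 0")
    case True then show False using assms[of 1] A by simp
  next
    case False
    define s where "s = min 1 (A / (2 * B))"
    have s0: "0 < s" using A False by (simp add: s_def)
    have "s * B \<le> (A / (2*B)) * B" using False by (intro mult_right_mono) (auto simp: s_def)
    also have "\<dots> = A / 2" using False by simp
    finally show False using assms[OF s0] A by (simp add: s_def)
  qed
qed

lemma grad_ineq:
  fixes \<phi> :: "'a::euclidean_space \<Rightarrow> real"
  assumes cvx: "convex_on UNIV \<phi>"
    and der: "\<And>y. (\<phi> has_derivative (\<lambda>u. d y \<bullet> u)) (at y)"
    and lip: "L-lipschitz_on UNIV d"
  shows "\<phi> x + d x \<bullet> (z - x) \<le> \<phi> z"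
proof -
  define v where "v = z - x"
  have "d x \<bullet> v - (\<phi> z - \<phi> x) \<le> 0"
  proof (rule small_nonpos)
    fix s :: real assume s: "0 < s" "s \<le> 1"
    have "\<phi> ((1 - s) *\<^sub>R x + s *\<^sub>R z) \<le> (1 - s) * \<phi> x + s * \<phi> z"
      using convex_onD[OF cvx] s by simp
    moreover have "(1 - s) *\<^sub>R x + s *\<^sub>R z = x + s *\<^sub>R v"
      by (simp add: v_def algebra_simps)
    moreover have "\<phi> (x + s *\<^sub>R v) \<ge> \<phi> x + d x \<bullet> (s *\<^sub>R v) - L/2 * (norm (s *\<^sub>R v))\<^sup>2"
      using smooth_bound(2)[OF der lip, where y="x + s *\<^sub>R v" and x=x] by simp
    ultimately have "s * (d x \<bullet> v) - L/2 * s\<^sup>2 * (norm v)\<^sup>2 \<le> s * (\<phi> z - \<phi> x)"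
      using s by (simp add: power_mult_distrib algebra_simps)
    then have "s * (d x \<bullet> v - (\<phi> z - \<phi> x)) \<le> s * (s * (L/2 * (norm v)\<^sup>2))"
      by (simp add: power2_eq_square algebra_simps)
    then show "d x \<bullet> v - (\<phi> z - \<phi> x) \<le> s * (L/2 * (norm v)\<^sup>2)"
      using s by simp
  qed
  then show ?thesis by (simp add: v_def)
qed

lemma cocoercive:
  fixes \<phi> :: "'a::euclidean_space \<Rightarrow> real"
  assumes cvx: "convex_on UNIV \<phi>"
    and der: "\<And>y. (\<phi> has_derivative (\<lambda>u. d y \<bullet> u)) (at y)"
    and lip: "L-lipschitz_on UNIV d" and L: "L > 0"
  shows "(norm (d x - d xs))\<^sup>2 \<le> 2 * L * (\<phi> x - \<phi> xs - d xs \<bullet> (x - xs))"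
proof -
  define u where "u = d x - d xs"
  define w where "w = x - (1/L) *\<^sub>R u"
  have 1: "\<phi> xs + d xs \<bullet> (w - xs) \<le> \<phi> w" by (rule grad_ineq[OF cvx der lip])
  have 2: "\<phi> w \<le> \<phi> x + d x \<bullet> (w - x) + L/2 * (norm (w - x))\<^sup>2"
    by (rule smooth_bound(1)[OF der lip])
  have wx: "w - x = - (1/L) *\<^sub>R u" by (simp add: w_def)
  have wxs: "w - xs = (x - xs) - (1/L) *\<^sub>R u" by (simp add: w_def)
  have "\<phi> xs + d xs \<bullet> (x - xs) - (1/L) * (d xs \<bullet> u) \<le> \<phi> x - (1/L) * (d x \<bullet> u) + L/2 * ((1/L)\<^sup>2 * (norm u)\<^sup>2)"
    using 1 2 L unfolding wx wxs by (simp add: inner_diff_right power_mult_distrib power_divide)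
  moreover have "d x \<bullet> u - d xs \<bullet> u = (norm u)\<^sup>2"
    by (simp add: u_def power2_norm_eq_inner inner_diff_left)
  ultimately have "(1/L) * (norm u)\<^sup>2 - L/2 * ((1/L)\<^sup>2 * (norm u)\<^sup>2) \<le> \<phi> x - \<phi> xs - d xs \<bullet> (x - xs)"
    by (simp add: algebra_simps add_divide_distrib)
  moreover have "(1/L) * (norm u)\<^sup>2 - L/2 * ((1/L)\<^sup>2 * (norm u)\<^sup>2) = (norm u)\<^sup>2 / (2 * L)"
    using L by (simp add: power2_eq_square field_simps)
  ultimately have X: "(norm u)\<^sup>2 / (2 * L) \<le> \<phi> x - \<phi> xs - d xs \<bullet> (x - xs)" by simp
  have "(norm u)\<^sup>2 = (2 * L) * ((norm u)\<^sup>2 / (2 * L))" using L by simp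
  also have "\<dots> \<le> (2 * L) * (\<phi> x - \<phi> xs - d xs \<bullet> (x - xs))"
    using L X by (intro mult_left_mono) auto
  finally show ?thesis by (simp add: u_def)
qed

definition isprox :: "real \<Rightarrow> ('a::real_normed_vector \<Rightarrow> real) \<Rightarrow> 'a \<Rightarrow> 'a \<Rightarrow> bool" where
  "isprox lam phi y z \<longleftrightarrow> (\<forall>w. lam * phi z + (1/2) * (norm (y - z))\<^sup>2 \<le> lam * phi w + (1/2) * (norm (y - w))\<^sup>2)"

lemma prox_exists:
  fixes g :: "'a::euclidean_space \<Rightarrow> real"
  assumes lip: "Lg-lipschitz_on UNIV g" and lam: "lam > 0"
  shows "isprox lam g y (prox lam g y)"
proof -
  define \<psi> where "\<psi> = (\<lambda>w. lam * g w + (1/2) * (norm (y - w))\<^sup>2)"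
  define R where "R = 2 * lam * Lg + 1"
  have Lg0: "Lg \<ge> 0" using lip by (auto simp: lipschitz_on_def)
  have cg: "continuous_on UNIV g" by (rule lipschitz_on_continuous_on[OF lip])
  have cont: "continuous_on (cball y R) \<psi>" unfolding \<psi>_def
    by (intro continuous_intros continuous_on_subset[OF cg]) auto
  have "R \<ge> 0" using Lg0 lam by (simp add: R_def)
  then obtain p where p: "p \<in> cball y R" "\<And>w. w \<in> cball y R \<Longrightarrow> \<psi> p \<le> \<psi> w"
    using continuous_attains_inf[OF compact_cball _ cont] by fastforce
  have "\<psi> p \<le> \<psi> w" for w
  proof (cases "w \<in> cball y R")
    case True then show ?thesis using p by simp
  next
    case False
    then have far: "norm (w - y) > R" by (simp add: dist_norm norm_minus_commute)
    have "g y - g w \<le> Lg * norm (w - y)"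
      using lip unfolding lipschitz_on_def by (metis UNIV_I abs_le_D1 dist_norm dist_real_def norm_minus_commute)
    then have "lam * (g y) \<le> lam * (g w + Lg * norm (w - y))"
      using lam by (intro mult_left_mono) auto
    then have "lam * g y \<le> lam * g w + lam * Lg * norm (w - y)"
      by (simp add: algebra_simps)
    moreover have "lam * Lg * norm (w - y) < (1/2) * (norm (w - y))\<^sup>2"
    proof -
      have "lam * Lg < (1/2) * norm (w - y)" using far by (simp add: R_def)
      then have "lam * Lg * norm (w - y) < ((1/2) * norm (w - y)) * norm (w - y)"
        using far \<open>R \<ge> 0\<close> by (intro mult_strict_right_mono) auto
      then show ?thesis by (simp add: power2_eq_square)
    qed
    ultimately have "\<psi> y < \<psi> w" by (simp add: \<psi>_def norm_minus_commute)
    moreover have "\<psi> p \<le> \<psi> y" using p(2)[of y] \<open>R \<ge> 0\<close> by simp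
    ultimately show ?thesis by simp
  qed
  then have "\<exists>z. isprox lam g y z" unfolding isprox_def \<psi>_def by blast
  then show ?thesis unfolding prox_def isprox_def[symmetric] by (rule someI_ex)
qed

lemma prox_three_point:
  fixes g :: "'a::real_inner \<Rightarrow> real"
  assumes cvx: "convex_on UNIV g" and p: "isprox lam g y p" and lam: "lam \<ge> 0"
  shows "lam * g p + (1/2) * (norm (y - p))\<^sup>2 + (1/2) * (norm (w - p))\<^sup>2 \<le> lam * g w + (1/2) * (norm (y - w))\<^sup>2"
proof -
  have key: "(y - p) \<bullet> (w - p) - lam * (g w - g p) \<le> 0"
  proof (rule small_nonpos)
    fix s :: real assume s: "0 < s" "s \<le> 1"
    have "lam * g p + (1/2) * (norm (y - p))\<^sup>2 \<le> lam * g ((1 - s) *\<^sub>R p + s *\<^sub>R w) + (1/2) * (norm (y - ((1 - s) *\<^sub>R p + s *\<^sub>R w)))\<^sup>2"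
      using p unfolding isprox_def by blast
    moreover have "lam * g ((1 - s) *\<^sub>R p + s *\<^sub>R w) \<le> lam * ((1 - s) * g p + s * g w)"
      using convex_onD[OF cvx, of s p w] s lam by (intro mult_left_mono) auto
    moreover have "(norm (y - ((1 - s) *\<^sub>R p + s *\<^sub>R w)))\<^sup>2 = (norm (y - p))\<^sup>2 - 2 * s * ((y - p) \<bullet> (w - p)) + s\<^sup>2 * (norm (w - p))\<^sup>2"
    proof -
      have eq: "y - ((1 - s) *\<^sub>R p + s *\<^sub>R w) = (y - p) - s *\<^sub>R (w - p)" by (simp add: algebra_simps)
      show ?thesis unfolding eq norm_diff_sq[of "y - p"] by (simp add: power_mult_distrib)
    qed
    ultimately have "s * ((y - p) \<bullet> (w - p) - lam * (g w - g p)) \<le> s * (s * ((1/2) * (norm (w - p))\<^sup>2))"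
      by (simp add: algebra_simps power2_eq_square)
    then show "(y - p) \<bullet> (w - p) - lam * (g w - g p) \<le> s * ((1/2) * (norm (w - p))\<^sup>2)"
      using s by simp
  qed
  have "(norm (y - w))\<^sup>2 = (norm (y - p))\<^sup>2 - 2 * ((y - p) \<bullet> (w - p)) + (norm (w - p))\<^sup>2"
  proof -
    have "y - w = (y - p) - (w - p)" by simp
    then show ?thesis by (simp add: power2_norm_eq_inner inner_diff_left inner_diff_right inner_commute algebra_simps)
  qed
  with key show ?thesis by (simp add: algebra_simps)
qed

locale det =
  fixes D :: "'i measure" and f :: "'i \<Rightarrow> 'a::euclidean_space \<Rightarrow> real" and df :: "'i \<Rightarrow> 'a \<Rightarrow> 'a"
    and g :: "nat \<Rightarrow> 'a \<Rightarrow> real" and m :: nat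
    and L Lg \<tau> \<epsilon> :: real and xs :: 'a
  assumes Dprob: "prob_space D"
    and Lpos: "L > 0" and m1: "m \<ge> 1"
    and fconv: "\<And>i. i \<in> space D \<Longrightarrow> convex_on UNIV (f i)"
    and fderiv: "\<And>i y. i \<in> space D \<Longrightarrow> (f i has_derivative (\<lambda>u. df i y \<bullet> u)) (at y)"
    and fLip: "\<And>i. i \<in> space D \<Longrightarrow> L-lipschitz_on UNIV (df i)"
    and f_int: "\<And>y. integrable D (\<lambda>i. f i y)"
    and df_int: "\<And>y. integrable D (\<lambda>i. df i y)"
    and F_grad: "\<And>y. ((\<lambda>y. \<integral>i. f i y \<partial>D) has_derivative (\<lambda>u. (\<integral>i. df i y \<partial>D) \<bullet> u)) (at y)"
    and gconv: "\<And>j. j \<in> {1..m} \<Longrightarrow> convex_on UNIV (g j)"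
    and gLip: "\<And>j. j \<in> {1..m} \<Longrightarrow> Lg-lipschitz_on UNIV (g j)"
    and xs_min: "\<And>y. (\<integral>i. f i xs \<partial>D) + (\<Sum>j = 1..m. g j xs) \<le> (\<integral>i. f i y \<partial>D) + (\<Sum>j = 1..m. g j y)"
    and sigma_fin: "integrable D (\<lambda>i. (norm (df i xs))\<^sup>2)"
    and tau_pos: "\<tau> > 0" and tauL: "\<tau> * L < 1/4"
    and eps_pos: "\<epsilon> > 0"
begin

definition "FF y = (\<integral>i. f i y \<partial>D)"
definition "GG y = (\<Sum>j = 1..m. g j y)"
definition "hh y = FF y + GG y"
definition "gF y = (\<integral>i. df i y \<partial>D)"

interpretation D: prob_space D by (rule Dprob)

lemma Lg0: "Lg \<ge> 0"
  using gLip[of 1] m1 by (auto simp: lipschitz_on_def)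

lemma gF_lip: "L-lipschitz_on UNIV gF"
proof (rule lipschitz_onI)
  fix x y :: 'a
  have "dist (gF x) (gF y) = norm (\<integral>i. df i x - df i y \<partial>D)"
    by (simp add: gF_def dist_norm Bochner_Integration.integral_diff[OF df_int df_int])
  also have "\<dots> \<le> (\<integral>i. norm (df i x - df i y) \<partial>D)" by (rule integral_norm_bound)
  also have "\<dots> \<le> (\<integral>i. L * dist x y \<partial>D)"
  proof (rule integral_mono')
    fix i assume "i \<in> space D"
    then show "norm (df i x - df i y) \<le> L * dist x y"
      using fLip[of i] by (simp add: lipschitz_on_def dist_norm)
  qed (use Lpos in auto)
  also have "\<dots> = L * dist x y" using D.prob_space by simp
  finally show "dist (gF x) (gF y) \<le> L * dist x y" .
qed (use Lpos in auto)

lemma FF_der: "(FF has_derivative (\<lambda>u. gF y \<bullet> u)) (at y)"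
  using F_grad[of y] unfolding FF_def[abs_def] gF_def by simp

lemma FF_upper: "FF y \<le> FF x + gF x \<bullet> (y - x) + L/2 * (norm (y - x))\<^sup>2"
  by (rule smooth_bound(1)[OF FF_der gF_lip])

lemma f_grad_ineq: "i \<in> space D \<Longrightarrow> f i x + df i x \<bullet> (z - x) \<le> f i z"
  by (rule grad_ineq[OF fconv fderiv fLip])

lemma FF_grad_ineq: "FF x + gF x \<bullet> (z - x) \<le> FF z"
proof -
  have "FF x + gF x \<bullet> (z - x) = (\<integral>i. f i x + df i x \<bullet> (z - x) \<partial>D)"
    using f_int[of x] df_int[of x]
    by (simp add: FF_def gF_def Bochner_Integration.integral_add)
  also have "\<dots> \<le> (\<integral>i. f i z \<partial>D)"
    using f_int[of x] df_int[of x] f_int[of z]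
    by (intro integral_mono) (auto intro: f_grad_ineq)
  finally show ?thesis by (simp add: FF_def)
qed

lemma hh_min: "hh xs \<le> hh y"
  using xs_min unfolding hh_def FF_def GG_def by blast

lemma optimality: "FF x - FF xs - gF xs \<bullet> (x - xs) \<le> hh x - hh xs"
proof -
  define v where "v = x - xs"
  define A where "A = gF xs \<bullet> v + (GG x - GG xs)"
  define B where "B = L/2 * (norm v)\<^sup>2"
  have "- A \<le> 0"
  proof (rule small_nonpos)
    fix s :: real assume s: "0 < s" "s \<le> 1"
    have 1: "hh xs \<le> hh (xs + s *\<^sub>R v)" by (rule hh_min)
    have 2: "FF (xs + s *\<^sub>R v) \<le> FF xs + s * (gF xs \<bullet> v) + s * (s * B)"
      using FF_upper[of "xs + s *\<^sub>R v" xs] s by (simp add: power_mult_distrib B_def power2_eq_square mult_ac)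
    have 3: "GG (xs + s *\<^sub>R v) \<le> (1 - s) * GG xs + s * GG x"
    proof -
      have "GG ((1 - s) *\<^sub>R xs + s *\<^sub>R x) \<le> (\<Sum>j = 1..m. (1 - s) * g j xs + s * g j x)"
        unfolding GG_def using s by (intro sum_mono convex_onD[OF gconv]) auto
      moreover have "(1 - s) *\<^sub>R xs + s *\<^sub>R x = xs + s *\<^sub>R v" by (simp add: v_def algebra_simps)
      ultimately show ?thesis by (simp add: GG_def sum.distrib sum_distrib_left)
    qed
    have "0 \<le> s * A + s * (s * B)"
      using 1 2 3 unfolding hh_def A_def by (simp add: algebra_simps)
    then have "0 \<le> s * (A + s * B)" by (simp add: algebra_simps)
    then have "0 \<le> A + s * B" using s by (simp add: zero_le_mult_iff)
    then show "- A \<le> s * B" by simp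
  qed
  then show ?thesis by (simp add: hh_def v_def A_def)
qed

lemma GG_lip: "\<bar>GG a - GG b\<bar> \<le> real m * Lg * norm (a - b)"
proof -
  have "\<bar>GG a - GG b\<bar> = \<bar>\<Sum>j = 1..m. g j a - g j b\<bar>" by (simp add: GG_def sum_subtractf)
  also have "\<dots> \<le> (\<Sum>j = 1..m. \<bar>g j a - g j b\<bar>)" by (rule sum_abs)
  also have "\<dots> \<le> (\<Sum>j = 1..m. Lg * norm (a - b))"
    by (intro sum_mono) (use gLip in \<open>auto simp: lipschitz_on_def dist_real_def dist_norm\<close>)
  finally show ?thesis by simp
qed

lemma g_lip: "j \<in> {1..m} \<Longrightarrow> \<bar>g j a - g j b\<bar> \<le> Lg * norm (a - b)"
  using gLip[of j] by (auto simp: lipschitz_on_def dist_real_def dist_norm)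


end

context det begin

lemma young1: "- (\<tau> * (e \<bullet> d)) \<le> \<tau>\<^sup>2 * (norm e)\<^sup>2 + (1/4) * (norm d)\<^sup>2"
proof -
  have 1: "\<bar>e \<bullet> d\<bar> \<le> norm e * norm d" by (rule Cauchy_Schwarz_ineq2)
  have 2: "0 \<le> (\<tau> * norm e - norm d / 2)\<^sup>2" by simp
  have 3: "(\<tau> * norm e - norm d / 2)\<^sup>2 = \<tau>\<^sup>2 * (norm e)\<^sup>2 - \<tau> * (norm e * norm d) + (1/4) * (norm d)\<^sup>2"
    by (simp add: power2_eq_square algebra_simps)
  have 4: "- (\<tau> * (e \<bullet> d)) \<le> \<tau> * (norm e * norm d)"
  proof -
    have "- (e \<bullet> d) \<le> norm e * norm d" using 1 by linarith
    then have "\<tau> * (- (e \<bullet> d)) \<le> \<tau> * (norm e * norm d)" using tau_pos by (intro mult_left_mono) auto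
    then show ?thesis by simp
  qed
  show ?thesis using 2 3 4 by linarith
qed

lemma young2: "2 * \<tau> * real m * Lg * t \<le> 8 * \<tau>\<^sup>2 * (real m)\<^sup>2 * Lg\<^sup>2 + (1/8) * t\<^sup>2"
proof -
  have 1: "0 \<le> (4 * \<tau> * real m * Lg - (1/2) * t)\<^sup>2" by simp
  have 2: "(4 * \<tau> * real m * Lg - (1/2) * t)\<^sup>2 = 16 * \<tau>\<^sup>2 * (real m)\<^sup>2 * Lg\<^sup>2 - 4 * \<tau> * real m * Lg * t + (1/4) * t\<^sup>2"
    by (simp add: power2_eq_square algebra_simps)
  show ?thesis using 1 2 by linarith
qed

lemma step_pointwise:
  fixes x z :: 'a
  assumes i: "i \<in> space D" and j: "j \<in> {1..m}"
  defines "x' \<equiv> prox (\<tau> * real m) (g j) (x - \<tau> *\<^sub>R df i x)"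
  shows "\<tau> * (hh x' - hh xs) + (1/2) * (norm (z - x'))\<^sup>2 \<le>
     (1/2) * (norm (z - x))\<^sup>2 + \<tau> * (FF z - hh xs) + \<tau> * real m * (g j z - g j x) + \<tau> * GG x
     - \<tau> * ((df i x - gF x) \<bullet> (x - z)) + \<tau>\<^sup>2 * (norm (df i x - gF x))\<^sup>2
     + 8 * \<tau>\<^sup>2 * (real m)\<^sup>2 * Lg\<^sup>2"
proof -
  define gi where "gi = df i x"
  define e where "e = gi - gF x"
  define y where "y = x - \<tau> *\<^sub>R gi"
  define d where "d = x' - x"
  have lam: "\<tau> * real m > 0" using tau_pos m1 by simp
  have px: "isprox (\<tau> * real m) (g j) y x'"
    unfolding x'_def y_def gi_def by (rule prox_exists[OF gLip[OF j] lam])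
  have tp: "\<tau> * real m * g j x' + (1/2) * (norm (y - x'))\<^sup>2 + (1/2) * (norm (z - x'))\<^sup>2
      \<le> \<tau> * real m * g j z + (1/2) * (norm (y - z))\<^sup>2"
    by (rule prox_three_point[OF gconv[OF j] px]) (use lam in simp)
  have n1: "(norm (y - x'))\<^sup>2 = (norm d)\<^sup>2 + 2 * \<tau> * (gi \<bullet> d) + \<tau>\<^sup>2 * (norm gi)\<^sup>2"
  proof -
    have "y - x' = - (d + \<tau> *\<^sub>R gi)" by (simp add: y_def d_def algebra_simps)
    then show ?thesis by (simp only: norm_minus_cancel norm_add_sq) (simp add: power_mult_distrib inner_commute)
  qed
  have n2: "(norm (y - z))\<^sup>2 = (norm (x - z))\<^sup>2 - 2 * \<tau> * (gi \<bullet> (x - z)) + \<tau>\<^sup>2 * (norm gi)\<^sup>2"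
  proof -
    have "y - z = (x - z) - \<tau> *\<^sub>R gi" by (simp add: y_def algebra_simps)
    then show ?thesis by (simp only: norm_diff_sq) (simp add: power_mult_distrib inner_commute)
  qed
  have F1: "FF x' \<le> FF x + gF x \<bullet> d + L/2 * (norm d)\<^sup>2"
    using FF_upper[of x' x] by (simp add: d_def)
  have F2: "FF x + gF x \<bullet> (z - x) \<le> FF z" by (rule FF_grad_ineq)
  have G1: "GG x' \<le> GG x + real m * Lg * norm d"
    using GG_lip[of x' x] by (simp add: d_def)
  have g1: "g j x \<le> g j x' + Lg * norm d"
    using g_lip[OF j, of x x'] by (simp add: d_def norm_minus_commute)
  have Y1: "- (\<tau> * (e \<bullet> d)) \<le> \<tau>\<^sup>2 * (norm e)\<^sup>2 + (1/4) * (norm d)\<^sup>2" by (rule young1)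
  have Y2: "2 * \<tau> * real m * Lg * norm d \<le> 8 * \<tau>\<^sup>2 * (real m)\<^sup>2 * Lg\<^sup>2 + (1/8) * (norm d)\<^sup>2"
    by (rule young2)
  have TL: "\<tau> * (L/2 * (norm d)\<^sup>2) \<le> (1/8) * (norm d)\<^sup>2"
  proof -
    have "\<tau> * (L/2 * (norm d)\<^sup>2) = (\<tau> * L) / 2 * (norm d)\<^sup>2" by simp
    also have "\<dots> \<le> (1/4) / 2 * (norm d)\<^sup>2" using tauL by (intro mult_right_mono) (auto simp: mult.commute)
    finally show ?thesis by simp
  qed
  have tF: "\<tau> * FF x' \<le> \<tau> * FF z + \<tau> * (gF x \<bullet> d) + \<tau> * (gF x \<bullet> (x - z)) + \<tau> * (L/2 * (norm d)\<^sup>2)"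
  proof -
    have "FF x' \<le> FF z + gF x \<bullet> d + gF x \<bullet> (x - z) + L/2 * (norm d)\<^sup>2"
      using F1 F2 by (simp add: inner_diff_right)
    then have "\<tau> * FF x' \<le> \<tau> * (FF z + gF x \<bullet> d + gF x \<bullet> (x - z) + L/2 * (norm d)\<^sup>2)"
      using tau_pos by (intro mult_left_mono) auto
    then show ?thesis by (simp only: distrib_left)
  qed
  have tG: "\<tau> * GG x' \<le> \<tau> * GG x + \<tau> * real m * Lg * norm d"
    using mult_left_mono[OF G1, of \<tau>] tau_pos by (simp add: algebra_simps)
  have tg: "\<tau> * real m * g j x \<le> \<tau> * real m * g j x' + \<tau> * real m * Lg * norm d"
    using mult_left_mono[OF g1, of "\<tau> * real m"] lam by (simp add: algebra_simps)
  have ie: "gi \<bullet> d = gF x \<bullet> d + e \<bullet> d" "gi \<bullet> (x - z) = gF x \<bullet> (x - z) + e \<bullet> (x - z)"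
    by (simp_all add: e_def inner_diff_left)
  have nz: "(norm (z - x))\<^sup>2 = (norm (x - z))\<^sup>2" by (simp add: norm_minus_commute)
  have n1': "(norm (y - x'))\<^sup>2 = (norm d)\<^sup>2 + 2 * (\<tau> * (gF x \<bullet> d)) + 2 * (\<tau> * (e \<bullet> d)) + \<tau>\<^sup>2 * (norm gi)\<^sup>2"
    using n1 ie by (simp add: algebra_simps)
  have n2': "(norm (y - z))\<^sup>2 = (norm (x - z))\<^sup>2 - 2 * (\<tau> * (gF x \<bullet> (x - z))) - 2 * (\<tau> * (e \<bullet> (x - z))) + \<tau>\<^sup>2 * (norm gi)\<^sup>2"
    using n2 unfolding ie(2) distrib_left by (simp add: mult.assoc)
  have Y2': "2 * (\<tau> * real m * Lg * norm d) \<le> 8 * \<tau>\<^sup>2 * (real m)\<^sup>2 * Lg\<^sup>2 + (1/8) * (norm d)\<^sup>2"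
    using Y2 by (simp add: mult.assoc)
  have X: "\<tau> * FF x' + \<tau> * GG x' - \<tau> * FF xs - \<tau> * GG xs + 1/2 * (norm (z - x'))\<^sup>2 \<le>
    1/2 * (norm (x - z))\<^sup>2 + \<tau> * FF z - \<tau> * FF xs - \<tau> * GG xs + \<tau> * real m * g j z
    - \<tau> * real m * g j x + \<tau> * GG x - \<tau> * (e \<bullet> (x - z)) + \<tau>\<^sup>2 * (norm e)\<^sup>2
    + 8 * \<tau>\<^sup>2 * (real m)\<^sup>2 * Lg\<^sup>2"
    using tp tF tG tg Y1 Y2' TL unfolding n1' n2' distrib_left right_diff_distrib by linarith
  show ?thesis
    unfolding hh_def e_def[symmetric] gi_def[symmetric] nz
    using X by (simp add: algebra_simps)
qed

end

lemma norm_add_sq_le2: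
  fixes a b :: "'a::real_inner"
  shows "(norm (a + b))\<^sup>2 \<le> 2 * (norm a)\<^sup>2 + 2 * (norm b)\<^sup>2"
proof -
  have "0 \<le> (norm (a - b))\<^sup>2" by simp
  then show ?thesis unfolding norm_add_sq norm_diff_sq by linarith
qed

lemma young_eps:
  fixes a b :: "'a::real_inner" and \<epsilon> :: real
  assumes e: "\<epsilon> > 0"
  shows "(norm (a + b))\<^sup>2 \<le> (1 + \<epsilon>) * (norm a)\<^sup>2 + (1 + 1/\<epsilon>) * (norm b)\<^sup>2"
proof -
  have 3: "a \<bullet> b \<le> norm a * norm b" by (metis Cauchy_Schwarz_ineq2 abs_le_D1)
  have 0: "0 \<le> (\<epsilon> * norm a - norm b)\<^sup>2" by simp
  have 1: "(\<epsilon> * norm a - norm b)\<^sup>2 = \<epsilon> * (\<epsilon> * (norm a)\<^sup>2 - 2 * (norm a * norm b) + (1/\<epsilon>) * (norm b)\<^sup>2)"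
    using e by (simp add: power2_eq_square field_simps)
  have 2: "0 \<le> \<epsilon> * (norm a)\<^sup>2 - 2 * (norm a * norm b) + (1/\<epsilon>) * (norm b)\<^sup>2"
    using 0 e unfolding 1 by (simp add: zero_le_mult_iff)
  show ?thesis unfolding norm_add_sq using 1 2 3 unfolding distrib_right by linarith
qed

context det begin

interpretation D: prob_space D by (rule Dprob)

lemma df_meas: "(\<lambda>i. df i y) \<in> borel_measurable D"
  using df_int[of y] by auto

lemma df_diff_bound: "i \<in> space D \<Longrightarrow> norm (df i y - df i y') \<le> L * norm (y - y')"
  using fLip[of i] by (auto simp: lipschitz_on_def dist_norm)

lemma int_sq2: "integrable D (\<lambda>i. (norm (df i y - df i y' - c))\<^sup>2)"
proof (rule D.integrable_const_bound[where B="2 * (L * norm (y - y'))\<^sup>2 + 2 * (norm c)\<^sup>2"])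
  show "AE i in D. norm ((norm (df i y - df i y' - c))\<^sup>2) \<le> 2 * (L * norm (y - y'))\<^sup>2 + 2 * (norm c)\<^sup>2"
  proof (rule AE_I2)
    fix i assume i: "i \<in> space D"
    have "(norm ((df i y - df i y') + (- c)))\<^sup>2 \<le> 2 * (norm (df i y - df i y'))\<^sup>2 + 2 * (norm (-c))\<^sup>2"
      by (rule norm_add_sq_le2)
    moreover have "(norm (df i y - df i y'))\<^sup>2 \<le> (L * norm (y - y'))\<^sup>2"
      using df_diff_bound[OF i, of y y'] by (intro power_mono) auto
    ultimately show "norm ((norm (df i y - df i y' - c))\<^sup>2) \<le> 2 * (L * norm (y - y'))\<^sup>2 + 2 * (norm c)\<^sup>2"
      by simp
  qed
qed (use df_meas in measurable)

lemma int_sq: "integrable D (\<lambda>i. (norm (df i y - c))\<^sup>2)"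
proof (rule Bochner_Integration.integrable_bound)
  show "integrable D (\<lambda>i. 2 * (L * norm (y - xs))\<^sup>2 + 2 * (2 * (norm (df i xs))\<^sup>2 + 2 * (norm c)\<^sup>2))"
    using sigma_fin by auto
  show "(\<lambda>i. (norm (df i y - c))\<^sup>2) \<in> borel_measurable D" using df_meas by measurable
  show "AE i in D. norm ((norm (df i y - c))\<^sup>2) \<le> norm (2 * (L * norm (y - xs))\<^sup>2 + 2 * (2 * (norm (df i xs))\<^sup>2 + 2 * (norm c)\<^sup>2))"
  proof (rule AE_I2)
    fix i assume i: "i \<in> space D"
    have "(norm ((df i y - df i xs) + (df i xs - c)))\<^sup>2 \<le> 2 * (norm (df i y - df i xs))\<^sup>2 + 2 * (norm (df i xs - c))\<^sup>2"
      by (rule norm_add_sq_le2)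
    moreover have "(norm (df i y - df i xs))\<^sup>2 \<le> (L * norm (y - xs))\<^sup>2"
      using df_diff_bound[OF i, of y xs] by (intro power_mono) auto
    moreover have "(norm (df i xs + (- c)))\<^sup>2 \<le> 2 * (norm (df i xs))\<^sup>2 + 2 * (norm (- c))\<^sup>2"
      by (rule norm_add_sq_le2)
    ultimately show "norm ((norm (df i y - c))\<^sup>2) \<le> norm (2 * (L * norm (y - xs))\<^sup>2 + 2 * (2 * (norm (df i xs))\<^sup>2 + 2 * (norm c)\<^sup>2))"
      by simp
  qed
qed

lemma var_le:
  fixes X :: "'i \<Rightarrow> 'a"
  assumes X: "integrable D X" and X2: "integrable D (\<lambda>i. (norm (X i))\<^sup>2)"
  shows "(\<integral>i. (norm (X i - (\<integral>i. X i \<partial>D)))\<^sup>2 \<partial>D) \<le> (\<integral>i. (norm (X i))\<^sup>2 \<partial>D)"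
proof -
  define c where "c = (\<integral>i. X i \<partial>D)"
  have "(\<integral>i. (norm (X i - c))\<^sup>2 \<partial>D) = (\<integral>i. (norm (X i))\<^sup>2 - 2 * (X i \<bullet> c) + (norm c)\<^sup>2 \<partial>D)"
    by (simp add: norm_diff_sq)
  also have "\<dots> = (\<integral>i. (norm (X i))\<^sup>2 \<partial>D) - 2 * (c \<bullet> c) + (norm c)\<^sup>2"
    using X X2 D.prob_space by (simp add: c_def)
  also have "\<dots> = (\<integral>i. (norm (X i))\<^sup>2 \<partial>D) - (norm c)\<^sup>2"
    by (simp add: power2_norm_eq_inner)
  finally show ?thesis by (simp add: c_def)
qed

definition "sig2 = (\<integral>i. (norm (df i xs))\<^sup>2 \<partial>D)"

lemma var_bound:
  "(\<integral>i. (norm (df i x - gF x))\<^sup>2 \<partial>D) \<le> (1 + \<epsilon>) * (2 * L * (hh x - hh xs)) + (1 + 1/\<epsilon>) * sig2"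
proof -
  define u where "u = (\<lambda>i. df i x - df i xs)"
  define Eu where "Eu = gF x - gF xs"
  have Eu: "(\<integral>i. u i \<partial>D) = Eu" using df_int by (simp add: u_def Eu_def gF_def)
  have pt: "(norm (df i x - gF x))\<^sup>2 \<le> (1 + \<epsilon>) * (norm (u i - Eu))\<^sup>2 + (1 + 1/\<epsilon>) * (norm (df i xs - gF xs))\<^sup>2" for i
  proof -
    have "df i x - gF x = (u i - Eu) + (df i xs - gF xs)" by (simp add: u_def Eu_def)
    then show ?thesis using young_eps[OF eps_pos, of "u i - Eu" "df i xs - gF xs"] by simp
  qed
  have iu: "integrable D (\<lambda>i. (norm (u i - Eu))\<^sup>2)" unfolding u_def by (rule int_sq2)
  have iw: "integrable D (\<lambda>i. (norm (df i xs - gF xs))\<^sup>2)" by (rule int_sq)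
  have "(\<integral>i. (norm (df i x - gF x))\<^sup>2 \<partial>D) \<le> (\<integral>i. (1 + \<epsilon>) * (norm (u i - Eu))\<^sup>2 + (1 + 1/\<epsilon>) * (norm (df i xs - gF xs))\<^sup>2 \<partial>D)"
    using iu iw int_sq[of x "gF x"] pt by (intro integral_mono) auto
  also have "\<dots> = (1 + \<epsilon>) * (\<integral>i. (norm (u i - Eu))\<^sup>2 \<partial>D) + (1 + 1/\<epsilon>) * (\<integral>i. (norm (df i xs - gF xs))\<^sup>2 \<partial>D)"
    using iu iw by simp
  also have "(\<integral>i. (norm (u i - Eu))\<^sup>2 \<partial>D) \<le> 2 * L * (hh x - hh xs)"
  proof -
    have "(\<integral>i. (norm (u i - Eu))\<^sup>2 \<partial>D) \<le> (\<integral>i. (norm (u i))\<^sup>2 \<partial>D)"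
      using var_le[of u] Eu df_int int_sq2[of x xs 0] by (simp add: u_def)
    also have "\<dots> \<le> (\<integral>i. 2 * L * (f i x - f i xs - df i xs \<bullet> (x - xs)) \<partial>D)"
      using int_sq2[of x xs 0] f_int df_int
      by (intro integral_mono) (auto simp: u_def intro!: cocoercive fconv fderiv fLip Lpos)
    also have "\<dots> = 2 * L * (FF x - FF xs - gF xs \<bullet> (x - xs))"
      using f_int df_int by (simp add: FF_def gF_def)
    also have "\<dots> \<le> 2 * L * (hh x - hh xs)"
      using optimality[of x] Lpos by (intro mult_left_mono) auto
    finally show ?thesis .
  qed
  also have "(\<integral>i. (norm (df i xs - gF xs))\<^sup>2 \<partial>D) \<le> sig2"
    unfolding sig2_def gF_def using var_le[of "\<lambda>i. df i xs"] df_int sigma_fin by simp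
  finally show ?thesis using eps_pos by (simp add: mult_left_mono add_mono)
qed

end

context det begin

interpretation D: prob_space D by (rule Dprob)

definition "gg j y = (if j \<in> {1..m} then g j y else 0)"

definition "Rf i j x z = (1/2) * (norm (z - x))\<^sup>2 + \<tau> * (FF z - hh xs) + \<tau> * real m * (gg j z - gg j x) + \<tau> * GG x
     - \<tau> * ((df i x - gF x) \<bullet> (x - z)) + \<tau>\<^sup>2 * (norm (df i x - gF x))\<^sup>2
     + 8 * \<tau>\<^sup>2 * (real m)\<^sup>2 * Lg\<^sup>2"

lemma step_pointwise':
  assumes "i \<in> space D" "j \<in> {1..m}"
  shows "\<tau> * (hh (prox (\<tau> * real m) (g j) (x - \<tau> *\<^sub>R df i x)) - hh xs)
     + (1/2) * (norm (z - prox (\<tau> * real m) (g j) (x - \<tau> *\<^sub>R df i x)))\<^sup>2 \<le> Rf i j x z"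
  using step_pointwise[OF assms, of x z] assms(2) unfolding Rf_def gg_def by simp

lemma Rf_integral:
  fixes M :: "'w measure" and ii :: "'w \<Rightarrow> 'i" and jj :: "'w \<Rightarrow> nat"
  assumes M: "prob_space M"
    and ii: "ii \<in> measurable M D" "distr M D ii = D"
    and jj: "jj \<in> measurable M (count_space UNIV)" "distr M (count_space UNIV) jj = measure_pmf (pmf_of_set {1..m})"
  shows "integrable M (\<lambda>\<omega>. Rf (ii \<omega>) (jj \<omega>) x z)"
    and "(\<integral>\<omega>. Rf (ii \<omega>) (jj \<omega>) x z \<partial>M) \<le> (1/2) * (norm (z - x))\<^sup>2 + \<tau> * (hh z - hh xs)
          + \<tau> * (2 * \<tau> * L * (1 + \<epsilon>)) * (hh x - hh xs) + \<tau> * ((1 + 1/\<epsilon>) * sig2 * \<tau>)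
          + 8 * \<tau>\<^sup>2 * (real m)\<^sup>2 * Lg\<^sup>2"
proof -
  interpret M: prob_space M by (rule M)
  define A where "A = (1/2) * (norm (z - x))\<^sup>2 + \<tau> * (FF z - hh xs) + \<tau> * GG x + 8 * \<tau>\<^sup>2 * (real m)\<^sup>2 * Lg\<^sup>2"
  define J where "J = (\<lambda>j. \<tau> * real m * (gg j z - gg j x))"
  define I where "I = (\<lambda>i. \<tau>\<^sup>2 * (norm (df i x - gF x))\<^sup>2 - \<tau> * ((df i x - gF x) \<bullet> (x - z)))"
  have R: "Rf i j x z = A + J j + I i" for i j
    unfolding Rf_def A_def J_def I_def by (simp add: algebra_simps)
  have U: "{1..m} \<noteq> {}" "finite {1..m}" using m1 by auto
  have IJ: "integrable (measure_pmf (pmf_of_set {1..m})) J"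
    by (rule integrable_measure_pmf_finite) (subst set_pmf_of_set[OF U], rule U(2))
  then have IJ': "integrable M (\<lambda>\<omega>. J (jj \<omega>))"
    using integrable_distr_eq[OF jj(1), of J] jj(2) by simp
  have II: "integrable D I"
    unfolding I_def using int_sq[of x "gF x"] df_int[of x] by auto
  have Imeas: "I \<in> borel_measurable D" using II by auto
  then have II': "integrable M (\<lambda>\<omega>. I (ii \<omega>))"
    using integrable_distr_eq[OF ii(1) Imeas] ii(2) II by simp
  show "integrable M (\<lambda>\<omega>. Rf (ii \<omega>) (jj \<omega>) x z)"
    unfolding R using IJ' II' by auto
  have "(\<integral>\<omega>. Rf (ii \<omega>) (jj \<omega>) x z \<partial>M) = A + (\<integral>\<omega>. J (jj \<omega>) \<partial>M) + (\<integral>\<omega>. I (ii \<omega>) \<partial>M)"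
    unfolding R using IJ' II' M.prob_space by simp
  also have "(\<integral>\<omega>. J (jj \<omega>) \<partial>M) = (\<integral>j. J j \<partial>measure_pmf (pmf_of_set {1..m}))"
    using integral_distr[OF jj(1), of J] jj(2) by simp
  also have "\<dots> = (\<Sum>j\<in>{1..m}. J j) / real m"
    using integral_pmf_of_set[OF U, of J] by simp
  also have "\<dots> = \<tau> * (GG z - GG x)"
    using m1 by (simp add: J_def gg_def GG_def sum_subtractf sum_distrib_left[symmetric])
  also have "(\<integral>\<omega>. I (ii \<omega>) \<partial>M) = (\<integral>i. I i \<partial>D)"
    using integral_distr[OF ii(1) Imeas] ii(2) by simp
  also have "\<dots> = \<tau>\<^sup>2 * (\<integral>i. (norm (df i x - gF x))\<^sup>2 \<partial>D)"
  proof -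
    have "(\<integral>i. I i \<partial>D) = \<tau>\<^sup>2 * (\<integral>i. (norm (df i x - gF x))\<^sup>2 \<partial>D) - \<tau> * ((\<integral>i. df i x - gF x \<partial>D) \<bullet> (x - z))"
      unfolding I_def using int_sq[of x "gF x"] df_int[of x] by simp
    moreover have "(\<integral>i. df i x - gF x \<partial>D) = 0"
      using df_int[of x] D.prob_space by (simp add: gF_def)
    ultimately show ?thesis by simp
  qed
  also have "\<dots> \<le> \<tau>\<^sup>2 * ((1 + \<epsilon>) * (2 * L * (hh x - hh xs)) + (1 + 1/\<epsilon>) * sig2)"
    by (intro mult_left_mono var_bound) auto
  finally show "(\<integral>\<omega>. Rf (ii \<omega>) (jj \<omega>) x z \<partial>M) \<le> (1/2) * (norm (z - x))\<^sup>2 + \<tau> * (hh z - hh xs)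
          + \<tau> * (2 * \<tau> * L * (1 + \<epsilon>)) * (hh x - hh xs) + \<tau> * ((1 + 1/\<epsilon>) * sig2 * \<tau>)
          + 8 * \<tau>\<^sup>2 * (real m)\<^sup>2 * Lg\<^sup>2"
    unfolding A_def hh_def by (simp add: algebra_simps power2_eq_square)
qed

end

lemma alphaw_pos:
  assumes a: "0 < a" and t: "t \<le> T"
  shows "alphaw a T t > 0"
  using t
proof (induction t)
  case 0 then show ?case by simp
next
  case (Suc t)
  then have "real T - real (Suc t) + 2 > 0" "a + real T - real (Suc t) + 1 > 0" using a by auto
  then show ?case using Suc by simp
qed

lemma alphaw_coef:
  assumes a: "0 < a" "a < 1" and t: "t \<le> T"
  defines "r \<equiv> alphaw a T (t - 1) / alphaw a T t"
  shows "alphaw a T (t - 1) = r * alphaw a T t" "0 < r" "r \<le> 1"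
    "(real T - real t + 1) * (1 - r) + a \<le> r"
proof -
  have p: "alphaw a T t > 0" "alphaw a T (t - 1) > 0" using alphaw_pos[OF a(1)] t by auto
  show "alphaw a T (t - 1) = r * alphaw a T t" using p by (simp add: r_def)
  show "0 < r" using p by (simp add: r_def)
  have "r \<le> 1 \<and> (real T - real t + 1) * (1 - r) + a \<le> r"
  proof (cases t)
    case 0 then show ?thesis using a by (simp add: r_def)
  next
    case (Suc s)
    define k where "k = real T - real t + 1"
    have k: "k \<ge> 1" using t by (simp add: k_def)
    have "alphaw a T t = (k + 1) / (a + k) * alphaw a T s"
      using Suc by (simp add: k_def algebra_simps)
    define A where "A = alphaw a T s"
    have A: "A > 0" using p Suc by (simp add: A_def)
    have "r = A / ((k + 1) / (a + k) * A)" using \<open>alphaw a T t = _\<close> Suc by (simp add: r_def A_def)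
    also have "\<dots> = (k + a) / (k + 1)"
    proof -
      have "a + k > 0" "k + 1 > 0" using k a by auto
      have "A / ((k + 1) / (a + k) * A) = 1 / ((k + 1) / (a + k))" using A by simp
      also have "\<dots> = (k + a) / (k + 1)" by (simp add: add.commute)
      finally show ?thesis .
    qed
    finally have rr: "r = (k + a) / (k + 1)" .
    have "r \<le> 1" unfolding rr using a k by simp
    moreover have "k * (1 - r) + a \<le> r"
    proof -
      have "k * (1 - r) + a = (k * (1 - a) + a * (k + 1)) / (k + 1)"
        unfolding rr using k by (simp add: field_simps)
      also have "\<dots> = r" unfolding rr by (simp add: algebra_simps)
      finally show ?thesis by simp
    qed
    ultimately show ?thesis by (simp add: k_def)
  qed
  then show "r \<le> 1" "(real T - real t + 1) * (1 - r) + a \<le> r" by auto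
qed

lemma combine_coef:
  fixes \<alpha> \<alpha>m r k a \<tau> \<psi>z \<psi>Z \<Delta> :: real
  assumes "\<alpha> > 0" "\<alpha>m = r * \<alpha>" "0 < r" "r \<le> 1" "k * (1 - r) + a \<le> r" "k \<ge> 0" "\<tau> > 0"
    "\<psi>z \<le> r * \<psi>Z + (1 - r) * \<Delta>" "\<Delta> \<ge> 0" "\<psi>Z \<ge> 0"
  shows "\<alpha> * (\<tau> * \<psi>z + \<tau> * a * \<Delta>) + \<tau> * (\<alpha> * (k - 1)) * \<psi>z \<le> \<tau> * \<alpha>m * \<Delta> + \<tau> * (\<alpha>m * k) * \<psi>Z"
proof -
  have "\<alpha> * (\<tau> * \<psi>z + \<tau> * a * \<Delta>) + \<tau> * (\<alpha> * (k - 1)) * \<psi>z = \<tau> * ((\<alpha> * k) * \<psi>z + \<alpha> * a * \<Delta>)"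
    by (simp add: algebra_simps)
  also have "\<dots> \<le> \<tau> * ((\<alpha> * k) * (r * \<psi>Z + (1 - r) * \<Delta>) + \<alpha> * a * \<Delta>)"
    using assms by (intro mult_left_mono add_right_mono) auto
  also have "\<dots> = \<tau> * ((\<alpha> * k * r) * \<psi>Z + \<alpha> * (k * (1 - r) + a) * \<Delta>)"
    by (simp add: algebra_simps)
  also have "\<dots> \<le> \<tau> * ((\<alpha> * k * r) * \<psi>Z + \<alpha> * r * \<Delta>)"
    using assms by (intro mult_left_mono add_left_mono mult_right_mono) auto
  also have "\<dots> = \<tau> * \<alpha>m * \<Delta> + \<tau> * (\<alpha>m * k) * \<psi>Z"
    using assms by (simp add: algebra_simps)
  finally show ?thesis .
qed

lemma combine_dist:
  fixes \<alpha> \<alpha>m r :: real and Z x :: "'a::real_normed_vector"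
  assumes "\<alpha> > 0" "\<alpha>m = r * \<alpha>" "0 < r" "r \<le> 1"
  shows "\<alpha> * (norm (r *\<^sub>R Z + (1 - r) *\<^sub>R x - x))\<^sup>2 \<le> \<alpha>m * (norm (Z - x))\<^sup>2"
proof -
  have "r *\<^sub>R Z + (1 - r) *\<^sub>R x - x = r *\<^sub>R (Z - x)" by (simp add: algebra_simps)
  then have "\<alpha> * (norm (r *\<^sub>R Z + (1 - r) *\<^sub>R x - x))\<^sup>2 = \<alpha> * (r * r) * (norm (Z - x))\<^sup>2"
    using assms by (simp add: power2_eq_square)
  also have "\<dots> \<le> \<alpha> * r * (norm (Z - x))\<^sup>2"
    using assms by (intro mult_right_mono mult_left_mono) (auto simp: mult_le_cancel_left1)
  finally show ?thesis using assms by (simp add: mult.commute)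
qed

context det begin

lemma FF_convex: "0 \<le> p \<Longrightarrow> p \<le> 1 \<Longrightarrow> FF (p *\<^sub>R u + (1 - p) *\<^sub>R w) \<le> p * FF u + (1 - p) * FF w"
proof -
  assume p: "0 \<le> p" "p \<le> 1"
  define c where "c = p *\<^sub>R u + (1 - p) *\<^sub>R w"
  have 1: "FF c + gF c \<bullet> (u - c) \<le> FF u" by (rule FF_grad_ineq)
  have 2: "FF c + gF c \<bullet> (w - c) \<le> FF w" by (rule FF_grad_ineq)
  have 3: "p *\<^sub>R (u - c) + (1 - p) *\<^sub>R (w - c) = 0" by (simp add: c_def algebra_simps)
  have "p * (FF c + gF c \<bullet> (u - c)) + (1 - p) * (FF c + gF c \<bullet> (w - c)) \<le> p * FF u + (1 - p) * FF w"
    using 1 2 p by (intro add_mono mult_left_mono) auto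
  moreover have "p * (FF c + gF c \<bullet> (u - c)) + (1 - p) * (FF c + gF c \<bullet> (w - c)) = FF c + gF c \<bullet> (p *\<^sub>R (u - c) + (1 - p) *\<^sub>R (w - c))"
    by (simp add: algebra_simps inner_add_right)
  ultimately show ?thesis using 3 by (simp add: c_def)
qed

lemma GG_convex: "0 \<le> p \<Longrightarrow> p \<le> 1 \<Longrightarrow> GG (p *\<^sub>R u + (1 - p) *\<^sub>R w) \<le> p * GG u + (1 - p) * GG w"
proof -
  assume p: "0 \<le> p" "p \<le> 1"
  have "GG (p *\<^sub>R u + (1 - p) *\<^sub>R w) = (\<Sum>j = 1..m. g j ((1 - (1 - p)) *\<^sub>R u + (1 - p) *\<^sub>R w))"
    by (simp add: GG_def)
  also have "\<dots> \<le> (\<Sum>j = 1..m. (1 - (1 - p)) * g j u + (1 - p) * g j w)"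
    using p by (intro sum_mono convex_onD[OF gconv]) auto
  finally show ?thesis by (simp add: GG_def sum.distrib sum_distrib_left)
qed

lemma hh_convex: "0 \<le> p \<Longrightarrow> p \<le> 1 \<Longrightarrow> hh (p *\<^sub>R u + (1 - p) *\<^sub>R w) \<le> p * hh u + (1 - p) * hh w"
  using FF_convex GG_convex unfolding hh_def by (smt (verit, ccfv_threshold) distrib_left)

end

lemma indep_bound:
  fixes M :: "'w measure" and X :: "'w \<Rightarrow> 'x" and Y :: "'w \<Rightarrow> 'y"
  assumes M: "prob_space M" and ind: "indep_rv M MX X MY Y"
    and Phi: "Phi \<in> borel_measurable (MX \<Otimes>\<^sub>M MY)"
    and Q: "Q \<in> borel_measurable MY"
    and bnd: "\<And>y. y \<in> space MY \<Longrightarrow> (\<integral>\<^sup>+ \<omega>'. Phi (X \<omega>', y) \<partial>M) \<le> Q y"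
  shows "(\<integral>\<^sup>+ \<omega>. Phi (X \<omega>, Y \<omega>) \<partial>M) \<le> (\<integral>\<^sup>+ \<omega>. Q (Y \<omega>) \<partial>M)"
proof -
  interpret M: prob_space M by (rule M)
  have X: "X \<in> measurable M MX" and Y: "Y \<in> measurable M MY"
    and eq: "distr M (MX \<Otimes>\<^sub>M MY) (\<lambda>\<omega>. (X \<omega>, Y \<omega>)) = distr M MX X \<Otimes>\<^sub>M distr M MY Y"
    using ind unfolding indep_rv_def by auto
  interpret PX: prob_space "distr M MX X" by (rule M.prob_space_distr[OF X])
  interpret PY: prob_space "distr M MY Y" by (rule M.prob_space_distr[OF Y])
  interpret P: pair_sigma_finite "distr M MX X" "distr M MY Y" ..
  have XY: "(\<lambda>\<omega>. (X \<omega>, Y \<omega>)) \<in> measurable M (MX \<Otimes>\<^sub>M MY)"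
    using X Y by (rule measurable_Pair)
  have Phi': "Phi \<in> borel_measurable (distr M MX X \<Otimes>\<^sub>M distr M MY Y)"
  proof -
    have "sets (distr M MX X \<Otimes>\<^sub>M distr M MY Y) = sets (MX \<Otimes>\<^sub>M MY)"
      by (rule sets_pair_measure_cong) simp_all
    then show ?thesis by (subst measurable_cong_sets[OF \<open>sets _ = _\<close> refl]) (rule Phi)
  qed
  have "(\<integral>\<^sup>+ \<omega>. Phi (X \<omega>, Y \<omega>) \<partial>M) = (\<integral>\<^sup>+ q. Phi q \<partial>distr M (MX \<Otimes>\<^sub>M MY) (\<lambda>\<omega>. (X \<omega>, Y \<omega>)))"
    using Phi by (subst nn_integral_distr[OF XY]) auto
  also have "\<dots> = (\<integral>\<^sup>+ q. Phi q \<partial>(distr M MX X \<Otimes>\<^sub>M distr M MY Y))" by (simp add: eq)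
  also have "\<dots> = (\<integral>\<^sup>+ y. (\<integral>\<^sup>+ x. Phi (x, y) \<partial>distr M MX X) \<partial>distr M MY Y)"
    by (rule P.nn_integral_snd[OF Phi', symmetric])
  also have "\<dots> \<le> (\<integral>\<^sup>+ y. Q y \<partial>distr M MY Y)"
  proof (rule nn_integral_mono)
    fix y assume y: "y \<in> space (distr M MY Y)"
    have y': "y \<in> space MY" using y by simp
    have "(\<lambda>x. (x, y)) \<in> measurable MX (MX \<Otimes>\<^sub>M MY)"
      by (rule measurable_Pair[OF measurable_ident_sets[OF refl] measurable_const[OF y']])
    then have "(\<lambda>x. Phi (x, y)) \<in> borel_measurable MX"
      by (rule measurable_compose) (rule Phi)
    then have "(\<integral>\<^sup>+ x. Phi (x, y) \<partial>distr M MX X) = (\<integral>\<^sup>+ \<omega>'. Phi (X \<omega>', y) \<partial>M)"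
      by (subst nn_integral_distr[OF X]) auto
    also have "\<dots> \<le> Q y" using bnd y by simp
    finally show "(\<integral>\<^sup>+ x. Phi (x, y) \<partial>distr M MX X) \<le> Q y" .
  qed
  also have "\<dots> = (\<integral>\<^sup>+ \<omega>. Q (Y \<omega>) \<partial>M)"
    using Q by (subst nn_integral_distr[OF Y]) auto
  finally show ?thesis .
qed

locale full = det +
  fixes M :: "'w measure" and ii and jj :: "nat \<Rightarrow> 'w \<Rightarrow> nat"
    and x and x0 and T :: nat
  assumes M: "prob_space M"
    and df_meas: "(\<lambda>p. df (fst p) (snd p)) \<in> borel_measurable (D \<Otimes>\<^sub>M borel)"
    and a_lt: "2 * \<tau> * L * (1 + \<epsilon>) < 1"
    and ii_distr: "\<And>t. ii t \<in> measurable M D \<and> distr M D (ii t) = D"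
    and jj_distr: "\<And>t. distr M (count_space UNIV) (jj t) = measure_pmf (pmf_of_set {1..m})"
    and indep_ij: "\<And>t. indep_rv M D (ii t) (count_space UNIV) (jj t)"
    and indep_hist: "\<And>t. indep_rv M
        (D \<Otimes>\<^sub>M count_space UNIV) (\<lambda>\<omega>. (ii t \<omega>, jj t \<omega>))
        (Pi\<^sub>M {..t} (\<lambda>_. borel)) (\<lambda>\<omega>. \<lambda>s\<in>{..t}. x s \<omega>)"
    and x_init: "\<And>\<omega>. \<omega> \<in> space M \<Longrightarrow> x 0 \<omega> = x0"
    and x_step: "\<And>t \<omega>. \<omega> \<in> space M \<Longrightarrow>
        x (Suc t) \<omega> = prox (\<tau> * real m) (g (jj t \<omega>)) (x t \<omega> - \<tau> *\<^sub>R df (ii t \<omega>) (x t \<omega>))"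
begin

definition "aa = 2 * \<tau> * L * (1 + \<epsilon>)"
definition "al t = alphaw aa T t"
definition "alm t = alphaw aa T (t - 1)"
definition "rr t = alm t / al t"
definition "CC t = alm t * (real T - real t + 1)"
definition "cc = (1 + 1/\<epsilon>) * sig2 * \<tau> + 8 * \<tau> * (real m)\<^sup>2 * Lg\<^sup>2"

primrec Zs where
  "Zs X 0 = xs"
| "Zs X (Suc t) = rr t *\<^sub>R Zs X t + (1 - rr t) *\<^sub>R X t"

definition "Pot t X = \<tau> * alm t * (hh (X t) - hh xs) + 1/2 * alm t * (norm (Zs X t - X t))\<^sup>2
   + \<tau> * CC t * (hh (Zs X t) - hh xs)"

lemma aa_pos: "0 < aa" and aa_lt: "aa < 1"
  using tau_pos Lpos eps_pos a_lt by (auto simp: aa_def)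

lemma Zs_local: "(\<And>s. s < t \<Longrightarrow> X s = X' s) \<Longrightarrow> Zs X t = Zs X' t"
  by (induction t) auto

lemma Pot_local: "(\<And>s. s \<le> t \<Longrightarrow> X s = X' s) \<Longrightarrow> Pot t X = Pot t X'"
  unfolding Pot_def using Zs_local[of t X X'] by simp

lemma FF_cont: "continuous_on UNIV FF"
  using FF_der has_derivative_continuous continuous_at_imp_continuous_on by blast

lemma GG_cont: "continuous_on UNIV GG"
proof -
  have "continuous_on UNIV (g j)" if "j \<in> {1..m}" for j
    using lipschitz_on_continuous_on[OF gLip[OF that]] .
  then show ?thesis unfolding GG_def[abs_def] by (intro continuous_intros) auto
qed

lemma FF_meas[measurable]: "FF \<in> borel_measurable borel"
  by (rule borel_measurable_continuous_onI[OF FF_cont])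
lemma GG_meas[measurable]: "GG \<in> borel_measurable borel"
  by (rule borel_measurable_continuous_onI[OF GG_cont])
lemma hh_meas[measurable]: "hh \<in> borel_measurable borel"
  unfolding hh_def[abs_def] by measurable
lemma gF_meas[measurable]: "gF \<in> borel_measurable borel"
  by (rule borel_measurable_continuous_onI[OF lipschitz_on_continuous_on[OF gF_lip]])

lemma gg_meas_j: "gg j \<in> borel_measurable borel"
proof (cases "j \<in> {1..m}")
  case True
  then have "gg j = g j" by (auto simp: gg_def)
  then show ?thesis using borel_measurable_continuous_onI[OF lipschitz_on_continuous_on[OF gLip[OF True]]] by simp
next
  case False
  then have "gg j = (\<lambda>_. 0)" by (auto simp: gg_def)
  then show ?thesis by simp
qed

lemma gg_meas[measurable (raw)]:
  assumes "a \<in> measurable N (count_space UNIV)" "b \<in> borel_measurable N"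
  shows "(\<lambda>q. gg (a q) (b q)) \<in> borel_measurable N"
proof (rule measurable_compose_countable'[where I=UNIV and g=a and f="\<lambda>j q. gg j (b q)"])
  fix j show "(\<lambda>q. gg j (b q)) \<in> borel_measurable N"
    by (rule measurable_compose[OF assms(2) gg_meas_j])
qed (use assms in auto)

lemma df_meas'[measurable (raw)]:
  assumes "a \<in> measurable N D" "b \<in> borel_measurable N"
  shows "(\<lambda>q. df (a q) (b q)) \<in> borel_measurable N"
  using measurable_compose[OF measurable_Pair[OF assms] df_meas] by simp

lemma Zs_meas: "t' \<le> Suc t \<Longrightarrow> (\<lambda>H. Zs H t') \<in> borel_measurable (Pi\<^sub>M {..t} (\<lambda>_. borel))"
proof (induction t')
  case 0 then show ?case by simp
next
  case (Suc s)
  then have s: "s \<in> {..t}" by simp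
  have "(\<lambda>H. H s) \<in> borel_measurable (Pi\<^sub>M {..t} (\<lambda>_. borel))"
    using measurable_component_singleton[OF s, of "\<lambda>_. borel"] by simp
  then show ?case using Suc by simp
qed

lemma Pot_meas: "(\<lambda>H. Pot t H) \<in> borel_measurable (Pi\<^sub>M {..t} (\<lambda>_. borel))"
proof -
  have [measurable]: "(\<lambda>H. Zs H t) \<in> borel_measurable (Pi\<^sub>M {..t} (\<lambda>_. borel))" by (rule Zs_meas) simp
  have [measurable]: "(\<lambda>H. H t) \<in> borel_measurable (Pi\<^sub>M {..t} (\<lambda>_. borel))"
    using measurable_component_singleton[of t "{..t}" "\<lambda>_. borel"] by simp
  show ?thesis unfolding Pot_def by measurable
qed

end

context full begin

interpretation M: prob_space M by (rule M)

lemma al_pos: "t \<le> T \<Longrightarrow> al t > 0"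
  unfolding al_def using alphaw_pos[OF aa_pos] by simp

lemma alm_Suc: "alm (Suc t) = al t" by (simp add: alm_def al_def)

lemma pot_step_det:
  assumes t: "t \<le> T"
  shows "al t * ((1/2) * (norm (Zs H (Suc t) - H t))\<^sup>2 + \<tau> * (hh (Zs H (Suc t)) - hh xs)
          + \<tau> * (2 * \<tau> * L * (1 + \<epsilon>)) * (hh (H t) - hh xs) + \<tau> * ((1 + 1/\<epsilon>) * sig2 * \<tau>)
          + 8 * \<tau>\<^sup>2 * (real m)\<^sup>2 * Lg\<^sup>2)
        + \<tau> * CC (Suc t) * (hh (Zs H (Suc t)) - hh xs) \<le> Pot t H + \<tau> * al t * cc"
proof -
  define r where "r = rr t"
  define k where "k = real T - real t + 1"
  define Z where "Z = Zs H t"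
  define y where "y = H t"
  have co: "alm t = r * al t" "0 < r" "r \<le> 1" "k * (1 - r) + aa \<le> r"
    using alphaw_coef[OF aa_pos aa_lt t] unfolding r_def rr_def alm_def al_def k_def by auto
  have ap: "al t > 0" by (rule al_pos[OF t])
  have z: "Zs H (Suc t) = r *\<^sub>R Z + (1 - r) *\<^sub>R y" by (simp add: r_def Z_def y_def)
  have cvx: "hh (Zs H (Suc t)) - hh xs \<le> r * (hh Z - hh xs) + (1 - r) * (hh y - hh xs)"
    using hh_convex[of r Z y] co unfolding z by (simp add: algebra_simps)
  have c1: "al t * (\<tau> * (hh (Zs H (Suc t)) - hh xs) + \<tau> * aa * (hh y - hh xs))
      + \<tau> * (al t * (k - 1)) * (hh (Zs H (Suc t)) - hh xs)
      \<le> \<tau> * alm t * (hh y - hh xs) + \<tau> * (alm t * k) * (hh Z - hh xs)"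
    by (rule combine_coef[OF ap co(1) co(2) co(3) co(4) _ tau_pos cvx])
       (use t hh_min in \<open>auto simp: k_def\<close>)
  have c2: "al t * (norm (Zs H (Suc t) - y))\<^sup>2 \<le> alm t * (norm (Z - y))\<^sup>2"
    unfolding z by (rule combine_dist[OF ap co(1) co(2) co(3)])
  have CS: "CC (Suc t) = al t * (k - 1)" "CC t = alm t * k"
    by (simp_all add: CC_def alm_Suc k_def)
  show ?thesis
    unfolding Pot_def CS cc_def aa_def[symmetric] Z_def[symmetric] y_def[symmetric]
    using c1 c2 unfolding distrib_left distrib_right by (simp add: algebra_simps power2_eq_square)
qed

end

context full begin

interpretation M: prob_space M by (rule M)

lemma AE_jj: "AE \<omega> in M. jj t \<omega> \<in> {1..m}"
proof -
  have jm: "jj t \<in> measurable M (count_space UNIV)" using indep_ij[of t] by (simp add: indep_rv_def)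
  have U: "{1..m} \<noteq> {}" "finite {1..m}" using m1 by auto
  have "AE j in distr M (count_space UNIV) (jj t). j \<in> {1..m}"
    unfolding jj_distr AE_measure_pmf_iff using set_pmf_of_set[OF U] by simp
  then show ?thesis by (subst (asm) AE_distr_iff[OF jm]) auto
qed

lemma step_exp:
  assumes t: "t \<le> T" and K: "K \<ge> 0"
  shows "(\<integral>\<^sup>+ \<omega>. ennreal (Pot (Suc t) (\<lambda>s. x s \<omega>) + K) \<partial>M)
     \<le> (\<integral>\<^sup>+ \<omega>. ennreal (Pot t (\<lambda>s. x s \<omega>) + \<tau> * al t * cc + K) \<partial>M)"
proof -
  define MY where "MY = Pi\<^sub>M {..t} (\<lambda>_. borel :: 'b measure)"
  define MX where "MX = D \<Otimes>\<^sub>M count_space (UNIV :: nat set)"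
  define Hist where "Hist = (\<lambda>\<omega>. \<lambda>s\<in>{..t}. x s \<omega>)"
  define X where "X = (\<lambda>\<omega>. (ii t \<omega>, jj t \<omega>))"
  define c0 where "c0 = (\<lambda>H. \<tau> * CC (Suc t) * (hh (Zs H (Suc t)) - hh xs))"
  define Phi where "Phi = (\<lambda>q. ennreal (al t * Rf (fst (fst q)) (snd (fst q)) (snd q t) (Zs (snd q) (Suc t)) + c0 (snd q) + K))"
  define Q where "Q = (\<lambda>H. ennreal (Pot t H + \<tau> * al t * cc + K))"
  have ind: "indep_rv M MX X MY Hist" using indep_hist[of t] by (simp add: MX_def MY_def X_def Hist_def)
  have ap: "al t > 0" by (rule al_pos[OF t])
  have CC0: "CC (Suc t) \<ge> 0" using t ap by (simp add: CC_def alm_Suc)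
  have c0_nn: "c0 H \<ge> 0" for H using CC0 tau_pos hh_min by (simp add: c0_def)
  have jm: "jj t \<in> measurable M (count_space UNIV)" using indep_ij[of t] by (simp add: indep_rv_def)
  have im: "ii t \<in> measurable M D" using ii_distr[of t] by simp
  have PhiM: "Phi \<in> borel_measurable (MX \<Otimes>\<^sub>M MY)"
  proof -
    have [measurable]: "(\<lambda>q. snd q t) \<in> borel_measurable (MX \<Otimes>\<^sub>M MY)"
      using measurable_compose[OF measurable_snd measurable_component_singleton[of t "{..t}" "\<lambda>_. borel"]]
      by (simp add: MY_def)
    have [measurable]: "(\<lambda>q. Zs (snd q) (Suc t)) \<in> borel_measurable (MX \<Otimes>\<^sub>M MY)"
      using measurable_compose[OF measurable_snd Zs_meas[of "Suc t" t]] by (simp add: MY_def)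
    have [measurable]: "(\<lambda>q. fst (fst q)) \<in> measurable (MX \<Otimes>\<^sub>M MY) D"
      unfolding MX_def by measurable
    have [measurable]: "(\<lambda>q. snd (fst q)) \<in> measurable (MX \<Otimes>\<^sub>M MY) (count_space UNIV)"
      unfolding MX_def by measurable
    show ?thesis unfolding Phi_def Rf_def c0_def by measurable
  qed
  have QM: "Q \<in> borel_measurable MY" unfolding Q_def MY_def using Pot_meas[of t] by measurable
  have bnd: "(\<integral>\<^sup>+ \<omega>'. Phi (X \<omega>', H) \<partial>M) \<le> Q H" if H: "H \<in> space MY" for H
  proof -
    define r where "r = (\<lambda>\<omega>'. al t * Rf (ii t \<omega>') (jj t \<omega>') (H t) (Zs H (Suc t)) + c0 H + K)"
    have RI: "integrable M (\<lambda>\<omega>. Rf (ii t \<omega>) (jj t \<omega>) (H t) (Zs H (Suc t)))"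
      and RB: "(\<integral>\<omega>. Rf (ii t \<omega>) (jj t \<omega>) (H t) (Zs H (Suc t)) \<partial>M) \<le> (1/2) * (norm (Zs H (Suc t) - H t))\<^sup>2 + \<tau> * (hh (Zs H (Suc t)) - hh xs)
          + \<tau> * (2 * \<tau> * L * (1 + \<epsilon>)) * (hh (H t) - hh xs) + \<tau> * ((1 + 1/\<epsilon>) * sig2 * \<tau>)
          + 8 * \<tau>\<^sup>2 * (real m)\<^sup>2 * Lg\<^sup>2"
      using Rf_integral[OF M im _ jm jj_distr[of t], of "H t" "Zs H (Suc t)"] ii_distr[of t] by auto
    have rI: "integrable M r" unfolding r_def using RI by auto
    have rnn: "AE \<omega>' in M. 0 \<le> r \<omega>'"
      using AE_jj[of t] AE_space
    proof eventually_elim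
      case (elim \<omega>')
      have i: "ii t \<omega>' \<in> space D" using measurable_space[OF im] elim by simp
      define x' where "x' = prox (\<tau> * real m) (g (jj t \<omega>')) (H t - \<tau> *\<^sub>R df (ii t \<omega>') (H t))"
      have "0 \<le> \<tau> * (hh x' - hh xs)" using hh_min[of x'] tau_pos by simp
      moreover have "0 \<le> (1/2) * (norm (Zs H (Suc t) - x'))\<^sup>2" by simp
      ultimately have "0 \<le> \<tau> * (hh x' - hh xs) + (1/2) * (norm (Zs H (Suc t) - x'))\<^sup>2" by linarith
      also have "\<dots> \<le> Rf (ii t \<omega>') (jj t \<omega>') (H t) (Zs H (Suc t))"
        unfolding x'_def by (rule step_pointwise'[OF i elim(1)])
      finally have "0 \<le> Rf (ii t \<omega>') (jj t \<omega>') (H t) (Zs H (Suc t))" .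
      then show ?case unfolding r_def using ap c0_nn K by simp
    qed
    have e1: "(\<integral>\<^sup>+ \<omega>'. Phi (X \<omega>', H) \<partial>M) = ennreal (\<integral>\<omega>'. r \<omega>' \<partial>M)"
    proof -
      have "(\<integral>\<^sup>+ \<omega>'. Phi (X \<omega>', H) \<partial>M) = (\<integral>\<^sup>+ \<omega>'. ennreal (r \<omega>') \<partial>M)"
        by (simp add: Phi_def X_def r_def)
      also have "\<dots> = ennreal (\<integral>\<omega>'. r \<omega>' \<partial>M)" by (rule nn_integral_eq_integral[OF rI rnn])
      finally show ?thesis .
    qed
    have e2: "(\<integral>\<omega>'. r \<omega>' \<partial>M) = al t * (\<integral>\<omega>. Rf (ii t \<omega>) (jj t \<omega>) (H t) (Zs H (Suc t)) \<partial>M) + c0 H + K"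
      unfolding r_def using RI M.prob_space by simp
    have e3: "al t * (\<integral>\<omega>. Rf (ii t \<omega>) (jj t \<omega>) (H t) (Zs H (Suc t)) \<partial>M) + c0 H + K \<le> Pot t H + \<tau> * al t * cc + K"
    proof -
      have "al t * (\<integral>\<omega>. Rf (ii t \<omega>) (jj t \<omega>) (H t) (Zs H (Suc t)) \<partial>M) \<le> al t * ((1/2) * (norm (Zs H (Suc t) - H t))\<^sup>2 + \<tau> * (hh (Zs H (Suc t)) - hh xs)
          + \<tau> * (2 * \<tau> * L * (1 + \<epsilon>)) * (hh (H t) - hh xs) + \<tau> * ((1 + 1/\<epsilon>) * sig2 * \<tau>)
          + 8 * \<tau>\<^sup>2 * (real m)\<^sup>2 * Lg\<^sup>2)"
        by (rule mult_left_mono[OF RB]) (use ap in simp)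
      then show ?thesis using pot_step_det[OF t, of H] unfolding c0_def by linarith
    qed
    show ?thesis unfolding e1 Q_def e2 using e3 by (rule ennreal_leI)
  qed
  have pw: "AE \<omega> in M. ennreal (Pot (Suc t) (\<lambda>s. x s \<omega>) + K) \<le> Phi (X \<omega>, Hist \<omega>)"
    using AE_jj[of t] AE_space
  proof eventually_elim
    case (elim \<omega>)
    have i: "ii t \<omega> \<in> space D" using measurable_space[OF im] elim by simp
    define Z where "Z = Zs (\<lambda>s. x s \<omega>) (Suc t)"
    have HZ: "Zs (Hist \<omega>) (Suc t) = Z" unfolding Z_def by (rule Zs_local) (simp add: Hist_def)
    have Ht: "Hist \<omega> t = x t \<omega>" by (simp add: Hist_def)
    have xs: "x (Suc t) \<omega> = prox (\<tau> * real m) (g (jj t \<omega>)) (x t \<omega> - \<tau> *\<^sub>R df (ii t \<omega>) (x t \<omega>))"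
      by (rule x_step[OF elim(2)])
    have sp: "\<tau> * (hh (x (Suc t) \<omega>) - hh xs) + (1/2) * (norm (Z - x (Suc t) \<omega>))\<^sup>2
        \<le> Rf (ii t \<omega>) (jj t \<omega>) (x t \<omega>) Z"
      unfolding xs by (rule step_pointwise'[OF i elim(1)])
    have "Pot (Suc t) (\<lambda>s. x s \<omega>) = al t * (\<tau> * (hh (x (Suc t) \<omega>) - hh xs) + (1/2) * (norm (Z - x (Suc t) \<omega>))\<^sup>2)
        + \<tau> * CC (Suc t) * (hh Z - hh xs)"
      unfolding Pot_def alm_Suc Z_def[symmetric] by (simp add: algebra_simps)
    also have "\<dots> \<le> al t * Rf (ii t \<omega>) (jj t \<omega>) (x t \<omega>) Z + \<tau> * CC (Suc t) * (hh Z - hh xs)"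
      using mult_left_mono[OF sp, of "al t"] ap by simp
    finally have le: "Pot (Suc t) (\<lambda>s. x s \<omega>) + K \<le> al t * Rf (ii t \<omega>) (jj t \<omega>) (x t \<omega>) Z + \<tau> * CC (Suc t) * (hh Z - hh xs) + K"
      by simp
    have "Phi (X \<omega>, Hist \<omega>) = ennreal (al t * Rf (ii t \<omega>) (jj t \<omega>) (x t \<omega>) Z + \<tau> * CC (Suc t) * (hh Z - hh xs) + K)"
      by (simp only: Phi_def X_def c0_def fst_conv snd_conv HZ Ht)
    then show ?case using ennreal_leI[OF le] by simp
  qed
  have "(\<integral>\<^sup>+ \<omega>. ennreal (Pot (Suc t) (\<lambda>s. x s \<omega>) + K) \<partial>M) \<le> (\<integral>\<^sup>+ \<omega>. Phi (X \<omega>, Hist \<omega>) \<partial>M)"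
    by (rule nn_integral_mono_AE[OF pw])
  also have "\<dots> \<le> (\<integral>\<^sup>+ \<omega>. Q (Hist \<omega>) \<partial>M)"
    by (rule indep_bound[OF M ind PhiM QM bnd])
  also have "\<dots> = (\<integral>\<^sup>+ \<omega>. ennreal (Pot t (\<lambda>s. x s \<omega>) + \<tau> * al t * cc + K) \<partial>M)"
  proof (rule nn_integral_cong)
    fix \<omega> have "Pot t (Hist \<omega>) = Pot t (\<lambda>s. x s \<omega>)" by (rule Pot_local) (simp add: Hist_def)
    then show "Q (Hist \<omega>) = ennreal (Pot t (\<lambda>s. x s \<omega>) + \<tau> * al t * cc + K)" by (simp add: Q_def)
  qed
  finally show ?thesis .
qed

end

context full begin

interpretation M: prob_space M by (rule M)

definition "P0 = \<tau> * (hh x0 - hh xs) + 1/2 * (norm (xs - x0))\<^sup>2"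

lemma sig2_nn: "sig2 \<ge> 0" unfolding sig2_def by simp

lemma cc_nn: "cc \<ge> 0"
  unfolding cc_def using sig2_nn tau_pos eps_pos by (intro add_nonneg_nonneg mult_nonneg_nonneg) auto

lemma chain:
  assumes "n \<le> Suc T" "K \<ge> 0"
  shows "(\<integral>\<^sup>+ \<omega>. ennreal (Pot n (\<lambda>s. x s \<omega>) + K) \<partial>M) \<le> ennreal (P0 + \<tau> * cc * (\<Sum>t<n. al t) + K)"
  using assms
proof (induction n arbitrary: K)
  case 0
  have "(\<integral>\<^sup>+ \<omega>. ennreal (Pot 0 (\<lambda>s. x s \<omega>) + K) \<partial>M) = (\<integral>\<^sup>+ \<omega>. ennreal (P0 + K) \<partial>M)"
  proof (rule nn_integral_cong)
    fix \<omega> assume "\<omega> \<in> space M"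
    then have "x 0 \<omega> = x0" by (rule x_init)
    then show "ennreal (Pot 0 (\<lambda>s. x s \<omega>) + K) = ennreal (P0 + K)"
      by (simp add: Pot_def P0_def alm_def CC_def)
  qed
  also have "\<dots> = ennreal (P0 + K)" using M.emeasure_space_1 by simp
  finally show ?case by simp
next
  case (Suc n)
  have n: "n \<le> T" using Suc by simp
  have K': "\<tau> * al n * cc + K \<ge> 0" using tau_pos al_pos[OF n] cc_nn Suc by simp
  have "(\<integral>\<^sup>+ \<omega>. ennreal (Pot (Suc n) (\<lambda>s. x s \<omega>) + K) \<partial>M)
      \<le> (\<integral>\<^sup>+ \<omega>. ennreal (Pot n (\<lambda>s. x s \<omega>) + (\<tau> * al n * cc + K)) \<partial>M)"
    using step_exp[OF n Suc.prems(2)] by (simp add: add.assoc)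
  also have "\<dots> \<le> ennreal (P0 + \<tau> * cc * (\<Sum>t<n. al t) + (\<tau> * al n * cc + K))"
    using Suc.IH[OF _ K'] n by simp
  also have "\<dots> = ennreal (P0 + \<tau> * cc * (\<Sum>t<Suc n. al t) + K)"
    by (simp add: algebra_simps)
  finally show ?case .
qed

lemma x_meas: "x s \<in> borel_measurable M"
proof -
  have "(\<lambda>\<omega>. \<lambda>s'\<in>{..s}. x s' \<omega>) \<in> measurable M (Pi\<^sub>M {..s} (\<lambda>_. borel))"
    using indep_hist[of s] by (simp add: indep_rv_def)
  from measurable_compose[OF this measurable_component_singleton[of s "{..s}" "\<lambda>_. borel"]]
  show ?thesis by simp
qed

lemma final:
  "(\<integral>\<^sup>+ \<omega>. ennreal (hh (x (Suc T) \<omega>) - hh xs) \<partial>M) \<le> ennreal ((P0 + \<tau> * cc * (\<Sum>t<Suc T. al t)) / (\<tau> * al T))"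
proof -
  define c where "c = \<tau> * al T"
  have c: "c > 0" using tau_pos al_pos[of T] by (simp add: c_def)
  have CT: "CC (Suc T) = 0" by (simp add: CC_def)
  have pw: "ennreal (hh (x (Suc T) \<omega>) - hh xs) = ennreal (1/c) * ennreal (c * (hh (x (Suc T) \<omega>) - hh xs))" for \<omega>
    using c hh_min[of "x (Suc T) \<omega>"] by (simp add: ennreal_mult[symmetric])
  have le: "ennreal (c * (hh (x (Suc T) \<omega>) - hh xs)) \<le> ennreal (Pot (Suc T) (\<lambda>s. x s \<omega>) + 0)" for \<omega>
  proof (rule ennreal_leI)
    have "0 \<le> 1/2 * alm (Suc T) * (norm (Zs (\<lambda>s. x s \<omega>) (Suc T) - x (Suc T) \<omega>))\<^sup>2"
      using al_pos[of T] by (simp add: alm_Suc)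
    then show "c * (hh (x (Suc T) \<omega>) - hh xs) \<le> Pot (Suc T) (\<lambda>s. x s \<omega>) + 0"
      unfolding Pot_def CT c_def alm_Suc by simp
  qed
  have meas: "(\<lambda>\<omega>. ennreal (c * (hh (x (Suc T) \<omega>) - hh xs))) \<in> borel_measurable M"
    using x_meas[of "Suc T"] by measurable
  have "(\<integral>\<^sup>+ \<omega>. ennreal (hh (x (Suc T) \<omega>) - hh xs) \<partial>M) = ennreal (1/c) * (\<integral>\<^sup>+ \<omega>. ennreal (c * (hh (x (Suc T) \<omega>) - hh xs)) \<partial>M)"
    unfolding pw by (rule nn_integral_cmult[OF meas])
  also have "\<dots> \<le> ennreal (1/c) * (\<integral>\<^sup>+ \<omega>. ennreal (Pot (Suc T) (\<lambda>s. x s \<omega>) + 0) \<partial>M)"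
    by (intro mult_left_mono nn_integral_mono le) simp
  also have "\<dots> \<le> ennreal (1/c) * ennreal (P0 + \<tau> * cc * (\<Sum>t<Suc T. al t) + 0)"
    by (intro mult_left_mono chain) simp_all
  also have "\<dots> = ennreal ((P0 + \<tau> * cc * (\<Sum>t<Suc T. al t)) / c)"
  proof -
    have "P0 \<ge> 0" unfolding P0_def using tau_pos hh_min[of x0] by simp
    moreover have "(\<Sum>t<Suc T. al t) \<ge> 0" using al_pos by (intro sum_nonneg) (simp add: less_imp_le)
    ultimately have B: "P0 + \<tau> * cc * (\<Sum>t<Suc T. al t) \<ge> 0" using tau_pos cc_nn by simp
    have "ennreal (1/c) * ennreal (P0 + \<tau> * cc * (\<Sum>t<Suc T. al t) + 0) = ennreal (1/c * (P0 + \<tau> * cc * (\<Sum>t<Suc T. al t)))"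
      using c B by (subst ennreal_mult[symmetric]) auto
    then show ?thesis by simp
  qed
  finally show ?thesis by (simp add: c_def)
qed

end

lemma final_alg:
  fixes \<tau> AT A0 S d n v w :: real
  assumes "\<tau> > 0" "AT > 0"
  shows "(\<tau> * d + 1/2 * n + \<tau> * (v + w) * (A0 + S)) / (\<tau> * AT) =
     1 / (2 * \<tau> * AT) * n + v * A0 / AT + v / AT * S + 1 / AT * d + w / AT * (A0 + S)"
  using assms by (simp add: field_simps)

theorem lemmaB4:
  fixes M :: "'w measure" and D :: "'i measure"
    and f :: "'i \<Rightarrow> 'a::euclidean_space \<Rightarrow> real" and df :: "'i \<Rightarrow> 'a \<Rightarrow> 'a"
    and g :: "nat \<Rightarrow> 'a \<Rightarrow> real" and m :: nat
    and L Lg \<tau> \<epsilon> :: real and T :: nat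
    and xs x0 :: 'a
    and ii :: "nat \<Rightarrow> 'w \<Rightarrow> 'i" and jj :: "nat \<Rightarrow> 'w \<Rightarrow> nat"
    and x :: "nat \<Rightarrow> 'w \<Rightarrow> 'a"
  defines "F \<equiv> (\<lambda>y. \<integral>i. f i y \<partial>D)"
    and "G \<equiv> (\<lambda>y. \<Sum>j = 1..m. g j y)"
  defines "h \<equiv> (\<lambda>y. F y + G y)"
  assumes M: "prob_space M" and Dprob: "prob_space D"
    and Lpos: "L > 0" and m1: "m \<ge> 1"
    (* the components f_i *)
    and fconv: "\<And>i. i \<in> space D \<Longrightarrow> convex_on UNIV (f i)"
    and fderiv: "\<And>i y. i \<in> space D \<Longrightarrow> (f i has_derivative (\<lambda>u. df i y \<bullet> u)) (at y)"
    and fLip: "\<And>i. i \<in> space D \<Longrightarrow> L-lipschitz_on UNIV (df i)"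
    and f_meas: "(\<lambda>p. f (fst p) (snd p)) \<in> borel_measurable (D \<Otimes>\<^sub>M borel)"
    and df_meas: "(\<lambda>p. df (fst p) (snd p)) \<in> borel_measurable (D \<Otimes>\<^sub>M borel)"
    and f_int: "\<And>y. integrable D (\<lambda>i. f i y)"
    and df_int: "\<And>y. integrable D (\<lambda>i. df i y)"
    and F_grad: "\<And>y. (F has_derivative (\<lambda>u. (\<integral>i. df i y \<partial>D) \<bullet> u)) (at y)"
    (* the components g_j *)
    and gconv: "\<And>j. j \<in> {1..m} \<Longrightarrow> convex_on UNIV (g j)"
    and glsc: "\<And>j. j \<in> {1..m} \<Longrightarrow> lsc (g j)"
    and gLip: "\<And>j. j \<in> {1..m} \<Longrightarrow> Lg-lipschitz_on UNIV (g j)"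
    (* minimizer with finite gradient variance *)
    and xs_min: "\<And>y. h xs \<le> h y"
    and sigma_fin: "integrable D (\<lambda>i. (norm (df i xs))\<^sup>2)"
    (* step size and parameters *)
    and T1: "T \<ge> 1" and tau_pos: "\<tau> > 0" and tauL: "\<tau> * L < 1/4"
    and eps_pos: "\<epsilon> > 0" and a_lt: "2 * \<tau> * L * (1 + \<epsilon>) < 1"
    (* sampling *)
    and ii_distr: "\<And>t. ii t \<in> measurable M D \<and> distr M D (ii t) = D"
    and jj_distr: "\<And>t. distr M (count_space UNIV) (jj t) = measure_pmf (pmf_of_set {1..m})"
    and indep_ij: "\<And>t. indep_rv M D (ii t) (count_space UNIV) (jj t)"
    and indep_hist: "\<And>t. indep_rv M
        (D \<Otimes>\<^sub>M count_space UNIV) (\<lambda>\<omega>. (ii t \<omega>, jj t \<omega>))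
        (Pi\<^sub>M {..t} (\<lambda>_. borel)) (\<lambda>\<omega>. \<lambda>s\<in>{..t}. x s \<omega>)"
    (* the iteration *)
    and x_init: "\<And>\<omega>. \<omega> \<in> space M \<Longrightarrow> x 0 \<omega> = x0"
    and x_step: "\<And>t \<omega>. \<omega> \<in> space M \<Longrightarrow>
        x (Suc t) \<omega> = prox (\<tau> * real m) (g (jj t \<omega>)) (x t \<omega> - \<tau> *\<^sub>R df (ii t \<omega>) (x t \<omega>))"
  shows "(let a = 2 * \<tau> * L * (1 + \<epsilon>);
              \<sigma>2 = (\<integral>i. (norm (df i xs))\<^sup>2 \<partial>D);
              v = (1 + 1 / \<epsilon>) * \<sigma>2 * \<tau>;
              \<alpha> = alphaw a T
          in (\<integral>\<^sup>+ \<omega>. ennreal (h (x (Suc T) \<omega>) - h xs) \<partial>M)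
             \<le> ennreal (1 / (2 * \<tau> * \<alpha> T) * (norm (x0 - xs))\<^sup>2
                 + v * \<alpha> 0 / \<alpha> T
                 + v / \<alpha> T * (\<Sum>t = 1..T. \<alpha> t)
                 + 1 / \<alpha> T * (h x0 - h xs)
                 + 8 * \<tau> * (real m)\<^sup>2 * Lg\<^sup>2 / \<alpha> T * (\<Sum>t = 0..T. \<alpha> t)))"
proof -
  have det: "det D f df g m L Lg \<tau> \<epsilon> xs"
  proof (rule det.intro)
    show "\<And>y. (\<integral>i. f i xs \<partial>D) + (\<Sum>j = 1..m. g j xs) \<le> (\<integral>i. f i y \<partial>D) + (\<Sum>j = 1..m. g j y)"
      using xs_min unfolding h_def F_def G_def by simp
    show "\<And>y. ((\<lambda>y. \<integral>i. f i y \<partial>D) has_derivative (\<lambda>u. (\<integral>i. df i y \<partial>D) \<bullet> u)) (at y)"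
      using F_grad unfolding F_def by simp
  qed (fact assms)+
  have fa: "full_axioms D df g m L \<tau> \<epsilon> M ii jj x x0"
    by (rule full_axioms.intro) (fact assms)+
  interpret full D f df g m L Lg \<tau> \<epsilon> xs M ii jj x x0 T
    by (rule full.intro[OF det fa])
  have hh: "h = hh" unfolding h_def F_def G_def hh_def[abs_def] FF_def[abs_def] GG_def[abs_def] by simp
  have s2: "(\<integral>i. (norm (df i xs))\<^sup>2 \<partial>D) = sig2" by (simp add: sig2_def)
  have aa: "2 * \<tau> * L * (1 + \<epsilon>) = aa" by (simp add: aa_def)
  define A where "A = alphaw aa T"
  have A0: "A 0 = 1" by (simp add: A_def)
  have AT: "A T > 0" using al_pos[of T] by (simp add: A_def al_def)
  have sums: "(\<Sum>t<Suc T. al t) = A 0 + (\<Sum>t = 1..T. A t)" "(\<Sum>t = 0..T. A t) = A 0 + (\<Sum>t = 1..T. A t)"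
    by (simp_all add: A_def al_def lessThan_Suc_atMost atLeast0AtMost[symmetric] sum.atLeast_Suc_atMost)
  have eq: "(P0 + \<tau> * cc * (\<Sum>t<Suc T. al t)) / (\<tau> * al T) =
      1 / (2 * \<tau> * A T) * (norm (x0 - xs))\<^sup>2
                 + (1 + 1 / \<epsilon>) * sig2 * \<tau> * A 0 / A T
                 + (1 + 1 / \<epsilon>) * sig2 * \<tau> / A T * (\<Sum>t = 1..T. A t)
                 + 1 / A T * (hh x0 - hh xs)
                 + 8 * \<tau> * (real m)\<^sup>2 * Lg\<^sup>2 / A T * (\<Sum>t = 0..T. A t)"
    unfolding P0_def cc_def al_def A_def[symmetric] norm_minus_commute[of xs x0]
    unfolding sums(1)[unfolded al_def A_def[symmetric]] sums(2)
    by (rule final_alg[OF tau_pos AT, where v="(1 + 1 / \<epsilon>) * sig2 * \<tau>" and w="8 * \<tau> * (real m)\<^sup>2 * Lg\<^sup>2"])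
  show ?thesis
    unfolding Let_def hh s2 aa A_def[symmetric] eq[symmetric]
    using final by (simp add: A_def al_def)
qed

end
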